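(* Let $A=[a_1,\dots,a_N]\in\mathbb{C}^{n\times N}$ be a random matrix with i.i.d. entries distributed as $N(0,1)+iN(0,1)$, let $x_0\in\mathbb{C}^n$ with $\|x_0\|=1$, and $b(j)=|a_j^*x_0|$. Let $I\subset\{1,\dots,N\}$ be such that $b(i)\le b(j)$ for all $i\in I$, $j\notin I$, with $|I|<N$, and let $\|b_I\|^2=\sum_{i\in I}b(i)^2$. Define $\tau_*=-2\ln(1-|I|/N)$, $\hat I=\{i:b(i)^2\le\tau_*\}$ and $\|\hat b\|^2=\sum_{i\in\hat I}b(i)^2$. Then for each $\epsilon>0$ and $\delta>0$, \[ \frac{\|b_I\|^2}{|I|}\le\frac{\|\hat b\|^2}{|\hat I|}+\epsilon(\tau_*+\delta) \] with probability at least \[ 1-2\exp\left(-\frac12\delta^2e^{-\delta}\left|1-|I|/N\right|^2N\right)-2\exp\left(-2\epsilon^2\left|1-|I|/N\right|^2\frac{|I|^2}{N}\right). \]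
   Context: $A^*$ denotes conjugate transpose; $\|\cdot\|$ is the Euclidean norm. *)

theory Defs
  imports "HOL-Probability.Probability"
begin

text \<open>A random n x N complex matrix (as a random variable A :: omega => nat => nat => complex,
  entry (k,j) for k < n, j < N; column j is a_j) whose entries are i.i.d.\<close>
definition iid_complex_gaussian_matrix ::
  "'w measure \<Rightarrow> ('w \<Rightarrow> nat \<Rightarrow> nat \<Rightarrow> complex) \<Rightarrow> nat \<Rightarrow> nat \<Rightarrow> bool" where
  "iid_complex_gaussian_matrix M A n N \<longleftrightarrow>
     prob_space.indep_vars M (\<lambda>_. borel)
       (\<lambda>(k, j, re) \<omega>. if re then Re (A \<omega> k j) else Im (A \<omega> k j))
       ({..<n} \<times> {..<N} \<times> (UNIV :: bool set))
   \<and> (\<forall>k<n. \<forall>j<N.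
        distributed M lborel (\<lambda>\<omega>. Re (A \<omega> k j)) (\<lambda>x. ennreal (std_normal_density x))
      \<and> distributed M lborel (\<lambda>\<omega>. Im (A \<omega> k j)) (\<lambda>x. ennreal (std_normal_density x)))"

definition cvec_norm :: "nat \<Rightarrow> (nat \<Rightarrow> complex) \<Rightarrow> real" where
  "cvec_norm n x = sqrt (\<Sum>k<n. (cmod (x k))\<^sup>2)"

definition bval :: "nat \<Rightarrow> (nat \<Rightarrow> nat \<Rightarrow> complex) \<Rightarrow> (nat \<Rightarrow> complex) \<Rightarrow> nat \<Rightarrow> real" where
  "bval n A x0 j = cmod (\<Sum>k<n. cnj (A k j) * x0 k)"

definition tau_star :: "nat \<Rightarrow> nat \<Rightarrow> real" where
  "tau_star m N = - 2 * ln (1 - real m / real N)"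

definition Ihat :: "(nat \<Rightarrow> real) \<Rightarrow> nat \<Rightarrow> real \<Rightarrow> nat set" where
  "Ihat b N \<tau> = {i \<in> {..<N}. (b i)\<^sup>2 \<le> \<tau>}"

end

theory Submission
  imports Defs "HOL-Real_Asymp.Real_Asymp"
begin

lemma conv1:
  fixes g :: "real \<Rightarrow> ennreal" and s r :: real
  assumes [measurable]: "g \<in> borel_measurable borel" and s: "s > 0" and r: "r > 0"
  shows "(\<integral>\<^sup>+b. \<integral>\<^sup>+d. g (b + d) * ennreal (normal_density 0 s b) * ennreal (normal_density 0 r d) \<partial>lborel \<partial>lborel)
       = (\<integral>\<^sup>+y. g y * ennreal (normal_density 0 (sqrt (r\<^sup>2 + s\<^sup>2)) y) \<partial>lborel)"
proof -
  have "(\<integral>\<^sup>+b. \<integral>\<^sup>+d. g (b + d) * ennreal (normal_density 0 s b) * ennreal (normal_density 0 r d) \<partial>lborel \<partial>lborel)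
     = (\<integral>\<^sup>+b. \<integral>\<^sup>+y. g y * ennreal (normal_density 0 s b) * ennreal (normal_density 0 r (y - b)) \<partial>lborel \<partial>lborel)"
  proof (rule nn_integral_cong)
    fix b :: real
    show "(\<integral>\<^sup>+d. g (b + d) * ennreal (normal_density 0 s b) * ennreal (normal_density 0 r d) \<partial>lborel)
      = (\<integral>\<^sup>+y. g y * ennreal (normal_density 0 s b) * ennreal (normal_density 0 r (y - b)) \<partial>lborel)"
      by (subst nn_integral_real_affine[where c=1 and t=b]) auto
  qed
  also have "\<dots> = (\<integral>\<^sup>+y. \<integral>\<^sup>+b. g y * ennreal (normal_density 0 s b) * ennreal (normal_density 0 r (y - b)) \<partial>lborel \<partial>lborel)"
    by (rule lborel_pair.Fubini') measurable
  also have "\<dots> = (\<integral>\<^sup>+y. g y * (\<integral>\<^sup>+b. ennreal (normal_density 0 r (y - b) * normal_density 0 s b) \<partial>lborel) \<partial>lborel)"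
    by (intro nn_integral_cong, subst nn_integral_cmult[symmetric])
       (auto simp: ennreal_mult' mult_ac intro!: nn_integral_cong)
  also have "\<dots> = (\<integral>\<^sup>+y. g y * ennreal (normal_density 0 (sqrt (r\<^sup>2 + s\<^sup>2)) y) \<partial>lborel)"
    using fun_cong[OF conv_normal_density_zero_mean[OF r s]] by simp
  finally show ?thesis .
qed

definition gauss2 :: "'w measure \<Rightarrow> ('w \<Rightarrow> real \<times> real) \<Rightarrow> real \<Rightarrow> bool" where
  "gauss2 M V s \<longleftrightarrow> V \<in> borel_measurable M \<and>
     (\<forall>f :: real \<times> real \<Rightarrow> ennreal. f \<in> borel_measurable borel \<longrightarrow>
        (\<integral>\<^sup>+\<omega>. f (V \<omega>) \<partial>M) = (\<integral>\<^sup>+x. \<integral>\<^sup>+y. f (x, y) * ennreal (normal_density 0 s x) * ennreal (normal_density 0 s y) \<partial>lborel \<partial>lborel))"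

lemma gauss2D:
  assumes "gauss2 M V s" "f \<in> borel_measurable borel"
  shows "(\<integral>\<^sup>+\<omega>. f (V \<omega>) \<partial>M) = (\<integral>\<^sup>+x. \<integral>\<^sup>+y. f (x, y) * ennreal (normal_density 0 s x) * ennreal (normal_density 0 s y) \<partial>lborel \<partial>lborel)"
  using assms unfolding gauss2_def by blast

lemma gauss2_add:
  assumes P: "prob_space M" and V: "gauss2 M V s" and W: "gauss2 M W r"
    and ind: "prob_space.indep_var M borel V borel W" and s: "s > 0" and r: "r > 0"
  shows "gauss2 M (\<lambda>\<omega>. V \<omega> + W \<omega>) (sqrt (s\<^sup>2 + r\<^sup>2))"
proof -
  interpret prob_space M by fact
  have Vm[measurable]: "V \<in> borel_measurable M" and Wm[measurable]: "W \<in> borel_measurable M"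
    using V W unfolding gauss2_def by auto
  let ?E = "\<lambda>s x. ennreal (normal_density 0 s x)"
  interpret DV: prob_space "distr M borel V" by (rule prob_space_distr) simp
  interpret DW: prob_space "distr M borel W" by (rule prob_space_distr) simp
  interpret DVW: pair_sigma_finite "distr M borel V" "distr M borel W" ..
  have dist: "distr M borel V \<Otimes>\<^sub>M distr M borel W = distr M (borel \<Otimes>\<^sub>M borel) (\<lambda>x. (V x, W x))"
    using ind by (simp add: indep_var_distribution_eq)
  show ?thesis unfolding gauss2_def
  proof (intro conjI allI impI)
    show "(\<lambda>\<omega>. V \<omega> + W \<omega>) \<in> borel_measurable M" by measurable
    fix f :: "real \<times> real \<Rightarrow> ennreal" assume f[measurable]: "f \<in> borel_measurable borel"
    define G where "G = (\<lambda>v. \<integral>\<^sup>+c. \<integral>\<^sup>+d. f (v + (c, d)) * ?E r c * ?E r d \<partial>lborel \<partial>lborel)"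
    have Gm[measurable]: "G \<in> borel_measurable borel" unfolding G_def by measurable
    have "(\<integral>\<^sup>+\<omega>. f (V \<omega> + W \<omega>) \<partial>M) = (\<integral>\<^sup>+p. f (fst p + snd p) \<partial>distr M (borel \<Otimes>\<^sub>M borel) (\<lambda>x. (V x, W x)))"
      by (subst nn_integral_distr) auto
    also have "\<dots> = (\<integral>\<^sup>+p. f (fst p + snd p) \<partial>(distr M borel V \<Otimes>\<^sub>M distr M borel W))"
      by (simp add: dist)
    also have "\<dots> = (\<integral>\<^sup>+v. \<integral>\<^sup>+w. f (v + w) \<partial>distr M borel W \<partial>distr M borel V)"
    proof -
      have m: "(\<lambda>p. f (fst p + snd p)) \<in> borel_measurable (distr M borel V \<Otimes>\<^sub>M distr M borel W)"
        by measurable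
      show ?thesis using DW.nn_integral_fst[OF m] by simp
    qed
    also have "\<dots> = (\<integral>\<^sup>+v. G v \<partial>distr M borel V)"
    proof (rule nn_integral_cong)
      fix v :: "real \<times> real"
      have "(\<integral>\<^sup>+w. f (v + w) \<partial>distr M borel W) = (\<integral>\<^sup>+\<omega>. f (v + W \<omega>) \<partial>M)"
        by (subst nn_integral_distr) auto
      also have "\<dots> = G v" unfolding G_def
        by (rule gauss2D[OF W, where f="\<lambda>w. f (v + w)"]) measurable
      finally show "(\<integral>\<^sup>+w. f (v + w) \<partial>distr M borel W) = G v" .
    qed
    also have "\<dots> = (\<integral>\<^sup>+\<omega>. G (V \<omega>) \<partial>M)"
      by (subst nn_integral_distr) auto
    also have "\<dots> = (\<integral>\<^sup>+a. \<integral>\<^sup>+b. G (a, b) * ?E s a * ?E s b \<partial>lborel \<partial>lborel)"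
      by (rule gauss2D[OF V Gm])
    also have "\<dots> = (\<integral>\<^sup>+a. \<integral>\<^sup>+b. \<integral>\<^sup>+c. \<integral>\<^sup>+d. f (a + c, b + d) * ?E s a * ?E s b * ?E r c * ?E r d \<partial>lborel \<partial>lborel \<partial>lborel \<partial>lborel)"
      unfolding G_def
      by (intro nn_integral_cong, subst nn_integral_multc[symmetric], measurable,
          subst nn_integral_multc[symmetric], measurable,
          intro nn_integral_cong, subst nn_integral_multc[symmetric], measurable,
          subst nn_integral_multc[symmetric], measurable,
          intro nn_integral_cong) (simp add: mult_ac)
    also have "\<dots> = (\<integral>\<^sup>+a. \<integral>\<^sup>+c. \<integral>\<^sup>+b. \<integral>\<^sup>+d. f (a + c, b + d) * ?E s a * ?E s b * ?E r c * ?E r d \<partial>lborel \<partial>lborel \<partial>lborel \<partial>lborel)"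
      by (intro nn_integral_cong lborel_pair.Fubini') measurable
    also have "\<dots> = (\<integral>\<^sup>+a. \<integral>\<^sup>+c. ?E s a * ?E r c * (\<integral>\<^sup>+b. \<integral>\<^sup>+d. f (a + c, b + d) * ?E s b * ?E r d \<partial>lborel \<partial>lborel) \<partial>lborel \<partial>lborel)"
      by (intro nn_integral_cong, subst nn_integral_cmult[symmetric], measurable,
          intro nn_integral_cong, subst nn_integral_cmult[symmetric], measurable,
          intro nn_integral_cong) (simp add: mult_ac)
    also have "\<dots> = (\<integral>\<^sup>+a. \<integral>\<^sup>+c. ?E s a * ?E r c * (\<integral>\<^sup>+y. f (a + c, y) * ?E (sqrt (r\<^sup>2 + s\<^sup>2)) y \<partial>lborel) \<partial>lborel \<partial>lborel)"
    proof (intro nn_integral_cong)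
      fix a c :: real
      have [measurable]: "(\<lambda>y. f (a + c, y)) \<in> borel_measurable borel" by measurable
      show "?E s a * ?E r c * (\<integral>\<^sup>+b. \<integral>\<^sup>+d. f (a + c, b + d) * ?E s b * ?E r d \<partial>lborel \<partial>lborel)
         = ?E s a * ?E r c * (\<integral>\<^sup>+y. f (a + c, y) * ?E (sqrt (r\<^sup>2 + s\<^sup>2)) y \<partial>lborel)"
        using conv1[OF _ s r, of "\<lambda>y. f (a + c, y)"] by simp
    qed
    also have "\<dots> = (\<integral>\<^sup>+a. \<integral>\<^sup>+c. (\<lambda>x. \<integral>\<^sup>+y. f (x, y) * ?E (sqrt (r\<^sup>2 + s\<^sup>2)) y \<partial>lborel) (a + c) * ?E s a * ?E r c \<partial>lborel \<partial>lborel)"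
      by (simp add: mult_ac)
    also have "\<dots> = (\<integral>\<^sup>+x. (\<integral>\<^sup>+y. f (x, y) * ?E (sqrt (r\<^sup>2 + s\<^sup>2)) y \<partial>lborel) * ?E (sqrt (r\<^sup>2 + s\<^sup>2)) x \<partial>lborel)"
      by (rule conv1[OF _ s r]) measurable
    also have "\<dots> = (\<integral>\<^sup>+x. \<integral>\<^sup>+y. f (x, y) * ?E (sqrt (s\<^sup>2 + r\<^sup>2)) x * ?E (sqrt (s\<^sup>2 + r\<^sup>2)) y \<partial>lborel \<partial>lborel)"
      by (intro nn_integral_cong, subst nn_integral_multc[symmetric], measurable,
          intro nn_integral_cong) (simp add: mult_ac add.commute)
    finally show "(\<integral>\<^sup>+\<omega>. f (V \<omega> + W \<omega>) \<partial>M) = (\<integral>\<^sup>+x. \<integral>\<^sup>+y. f (x, y) * ?E (sqrt (s\<^sup>2 + r\<^sup>2)) x * ?E (sqrt (s\<^sup>2 + r\<^sup>2)) y \<partial>lborel \<partial>lborel)" .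
  qed
qed

lemma nd_scale: "r > 0 \<Longrightarrow> normal_density 0 r (r * y) = normal_density 0 1 y / r"
  by (simp add: normal_density_def power_mult_distrib real_sqrt_mult field_simps)

lemma nd_prod:
  assumes "r > 0"
  shows "normal_density 0 r a * normal_density 0 r b = exp (- ((a\<^sup>2 + b\<^sup>2) / (2 * r\<^sup>2))) / (2 * pi * r\<^sup>2)"
proof -
  have "normal_density 0 r a * normal_density 0 r b = (exp (- a\<^sup>2 / (2 * r\<^sup>2)) * exp (- b\<^sup>2 / (2 * r\<^sup>2))) / (sqrt (2 * pi * r\<^sup>2) * sqrt (2 * pi * r\<^sup>2))"
    by (simp add: normal_density_def)
  also have "sqrt (2 * pi * r\<^sup>2) * sqrt (2 * pi * r\<^sup>2) = 2 * pi * r\<^sup>2"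
    by (simp add: real_sqrt_mult_self)
  also have "exp (- a\<^sup>2 / (2 * r\<^sup>2)) * exp (- b\<^sup>2 / (2 * r\<^sup>2)) = exp (- ((a\<^sup>2 + b\<^sup>2) / (2 * r\<^sup>2)))"
    by (simp add: mult_exp_exp add_divide_distrib)
  finally show ?thesis .
qed

lemma rot_key:
  assumes r: "r > 0" and ab: "\<alpha>\<^sup>2 + \<beta>\<^sup>2 = r\<^sup>2" and b: "\<beta> \<noteq> 0"
  shows "normal_density 0 1 x * normal_density 0 1 ((u - \<alpha> * x) / \<beta>)
       = r\<^sup>2 * (normal_density 0 r u * normal_density 0 r ((r\<^sup>2 * x - \<alpha> * u) / \<beta>))"
proof -
  have e: "(x\<^sup>2 + ((u - \<alpha> * x) / \<beta>)\<^sup>2) / 2 = (u\<^sup>2 + ((r\<^sup>2 * x - \<alpha> * u) / \<beta>)\<^sup>2) / (2 * r\<^sup>2)"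
  proof -
    have nz: "\<alpha>\<^sup>2 + \<beta>\<^sup>2 \<noteq> 0" using b by (simp add: add_nonneg_eq_0_iff)
    have "(x\<^sup>2 + ((u - \<alpha> * x) / \<beta>)\<^sup>2) / 2 = (u\<^sup>2 + (((\<alpha>\<^sup>2 + \<beta>\<^sup>2) * x - \<alpha> * u) / \<beta>)\<^sup>2) / (2 * (\<alpha>\<^sup>2 + \<beta>\<^sup>2))"
    proof -
      define D where "D = \<alpha>\<^sup>2 + \<beta>\<^sup>2"
      have D: "D \<noteq> 0" using nz D_def by simp
      have 1: "(x\<^sup>2 + ((u - \<alpha> * x) / \<beta>)\<^sup>2) / 2 = (u\<^sup>2 + D * x\<^sup>2 - 2 * \<alpha> * u * x) / (2 * \<beta>\<^sup>2)"
        using b unfolding D_def by (simp add: field_simps power2_eq_square)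
      have 2: "(u\<^sup>2 + ((D * x - \<alpha> * u) / \<beta>)\<^sup>2) / (2 * D) = (u\<^sup>2 + D * x\<^sup>2 - 2 * \<alpha> * u * x) / (2 * \<beta>\<^sup>2)"
      proof -
        have "(u\<^sup>2 + ((D * x - \<alpha> * u) / \<beta>)\<^sup>2) = D * (u\<^sup>2 + D * x\<^sup>2 - 2 * \<alpha> * u * x) / \<beta>\<^sup>2"
          using b unfolding D_def by (simp add: field_simps power2_eq_square)
        then show ?thesis using D b by (simp only:) (simp add: field_simps)
      qed
      show ?thesis unfolding 1[unfolded D_def] 2[unfolded D_def] ..
    qed
    then show ?thesis by (simp only: ab)
  qed
  have "normal_density 0 1 x * normal_density 0 1 ((u - \<alpha> * x) / \<beta>) = exp (- ((x\<^sup>2 + ((u - \<alpha> * x) / \<beta>)\<^sup>2) / 2)) / (2 * pi)"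
    unfolding normal_density_def by (simp add: mult_exp_exp real_sqrt_mult[symmetric] add_divide_distrib diff_divide_distrib)
  also have "\<dots> = exp (- ((u\<^sup>2 + ((r\<^sup>2 * x - \<alpha> * u) / \<beta>)\<^sup>2) / (2 * r\<^sup>2))) / (2 * pi)" by (simp only: e)
  also have "\<dots> = r\<^sup>2 * (normal_density 0 r u * normal_density 0 r ((r\<^sup>2 * x - \<alpha> * u) / \<beta>))"
    using r by (simp add: nd_prod)
  finally show ?thesis .
qed

lemma rot_main:
  fixes f :: "real \<times> real \<Rightarrow> ennreal"
  assumes f[measurable]: "f \<in> borel_measurable borel"
    and r: "r > 0" and ab: "\<alpha>\<^sup>2 + \<beta>\<^sup>2 = r\<^sup>2" and b: "\<beta> \<noteq> 0"
  shows "(\<integral>\<^sup>+x. \<integral>\<^sup>+y. f (\<alpha> * x + \<beta> * y, \<beta> * x - \<alpha> * y) * ennreal (normal_density 0 1 x * normal_density 0 1 y) \<partial>lborel \<partial>lborel)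
       = (\<integral>\<^sup>+u. \<integral>\<^sup>+v. f (u, v) * ennreal (normal_density 0 r u * normal_density 0 r v) \<partial>lborel \<partial>lborel)"
proof -
  let ?n = "normal_density 0 1" and ?m = "normal_density 0 r"
  have "(\<integral>\<^sup>+x. \<integral>\<^sup>+y. f (\<alpha> * x + \<beta> * y, \<beta> * x - \<alpha> * y) * ennreal (?n x * ?n y) \<partial>lborel \<partial>lborel)
     = (\<integral>\<^sup>+x. \<integral>\<^sup>+u. f (u, (r\<^sup>2 * x - \<alpha> * u) / \<beta>) * ennreal (?n x * ?n ((u - \<alpha> * x) / \<beta>) / \<bar>\<beta>\<bar>) \<partial>lborel \<partial>lborel)"
  proof (rule nn_integral_cong)
    fix x :: real
    let ?H = "\<lambda>u. f (u, (r\<^sup>2 * x - \<alpha> * u) / \<beta>) * ennreal (?n x * ?n ((u - \<alpha> * x) / \<beta>) / \<bar>\<beta>\<bar>)"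
    have "(\<integral>\<^sup>+u. ?H u \<partial>lborel) = ennreal \<bar>\<beta>\<bar> * (\<integral>\<^sup>+y. ?H (\<alpha> * x + \<beta> * y) \<partial>lborel)"
      by (rule nn_integral_real_affine[OF _ b]) measurable
    also have "\<dots> = (\<integral>\<^sup>+y. ennreal \<bar>\<beta>\<bar> * ?H (\<alpha> * x + \<beta> * y) \<partial>lborel)"
      by (rule nn_integral_cmult[symmetric]) measurable
    also have "\<dots> = (\<integral>\<^sup>+y. f (\<alpha> * x + \<beta> * y, \<beta> * x - \<alpha> * y) * ennreal (?n x * ?n y) \<partial>lborel)"
    proof (rule nn_integral_cong)
      fix y :: real
      have e1: "(r\<^sup>2 * x - \<alpha> * (\<alpha> * x + \<beta> * y)) / \<beta> = \<beta> * x - \<alpha> * y"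
        unfolding ab[symmetric] using b by (simp add: field_simps power2_eq_square)
      have e2: "(\<alpha> * x + \<beta> * y - \<alpha> * x) / \<beta> = y" using b by simp
      have e3: "ennreal \<bar>\<beta>\<bar> * ennreal (?n x * ?n y / \<bar>\<beta>\<bar>) = ennreal (?n x * ?n y)"
        using b by (simp add: ennreal_mult'[symmetric])
      show "ennreal \<bar>\<beta>\<bar> * ?H (\<alpha> * x + \<beta> * y) = f (\<alpha> * x + \<beta> * y, \<beta> * x - \<alpha> * y) * ennreal (?n x * ?n y)"
        unfolding e1 e2 by (metis e3 mult.left_commute mult.commute)
    qed
    finally show "(\<integral>\<^sup>+y. f (\<alpha> * x + \<beta> * y, \<beta> * x - \<alpha> * y) * ennreal (?n x * ?n y) \<partial>lborel) = (\<integral>\<^sup>+u. ?H u \<partial>lborel)" ..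
  qed
  also have "\<dots> = (\<integral>\<^sup>+u. \<integral>\<^sup>+x. f (u, (r\<^sup>2 * x - \<alpha> * u) / \<beta>) * ennreal (?n x * ?n ((u - \<alpha> * x) / \<beta>) / \<bar>\<beta>\<bar>) \<partial>lborel \<partial>lborel)"
    by (rule lborel_pair.Fubini') measurable
  also have "\<dots> = (\<integral>\<^sup>+u. \<integral>\<^sup>+v. f (u, v) * ennreal (?m u * ?m v) \<partial>lborel \<partial>lborel)"
  proof (rule nn_integral_cong)
    fix u :: real
    have c: "r\<^sup>2 / \<beta> \<noteq> 0" using r b by simp
    have "(\<integral>\<^sup>+v. f (u, v) * ennreal (?m u * ?m v) \<partial>lborel)
       = ennreal \<bar>r\<^sup>2 / \<beta>\<bar> * (\<integral>\<^sup>+x. f (u, - \<alpha> * u / \<beta> + r\<^sup>2 / \<beta> * x) * ennreal (?m u * ?m (- \<alpha> * u / \<beta> + r\<^sup>2 / \<beta> * x)) \<partial>lborel)"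
      by (rule nn_integral_real_affine[OF _ c]) measurable
    also have "\<dots> = (\<integral>\<^sup>+x. ennreal \<bar>r\<^sup>2 / \<beta>\<bar> * (f (u, - \<alpha> * u / \<beta> + r\<^sup>2 / \<beta> * x) * ennreal (?m u * ?m (- \<alpha> * u / \<beta> + r\<^sup>2 / \<beta> * x))) \<partial>lborel)"
      by (rule nn_integral_cmult[symmetric]) measurable
    also have "\<dots> = (\<integral>\<^sup>+x. f (u, (r\<^sup>2 * x - \<alpha> * u) / \<beta>) * ennreal (?n x * ?n ((u - \<alpha> * x) / \<beta>) / \<bar>\<beta>\<bar>) \<partial>lborel)"
    proof (rule nn_integral_cong)
      fix x :: real
      have e1: "- \<alpha> * u / \<beta> + r\<^sup>2 / \<beta> * x = (r\<^sup>2 * x - \<alpha> * u) / \<beta>"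
        using b by (simp add: field_simps)
      have e2: "?n x * ?n ((u - \<alpha> * x) / \<beta>) / \<bar>\<beta>\<bar> = \<bar>r\<^sup>2 / \<beta>\<bar> * (?m u * ?m ((r\<^sup>2 * x - \<alpha> * u) / \<beta>))"
        using rot_key[OF r ab b, of x u] by (simp add: abs_div)
      show "ennreal \<bar>r\<^sup>2 / \<beta>\<bar> * (f (u, - \<alpha> * u / \<beta> + r\<^sup>2 / \<beta> * x) * ennreal (?m u * ?m (- \<alpha> * u / \<beta> + r\<^sup>2 / \<beta> * x)))
          = f (u, (r\<^sup>2 * x - \<alpha> * u) / \<beta>) * ennreal (?n x * ?n ((u - \<alpha> * x) / \<beta>) / \<bar>\<beta>\<bar>)"
      proof -
        have m: "ennreal (\<bar>r\<^sup>2 / \<beta>\<bar> * (?m u * ?m ((r\<^sup>2 * x - \<alpha> * u) / \<beta>))) = ennreal \<bar>r\<^sup>2 / \<beta>\<bar> * ennreal (?m u * ?m ((r\<^sup>2 * x - \<alpha> * u) / \<beta>))"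
          by (rule ennreal_mult) auto
        show ?thesis unfolding e1 e2 m by (metis mult.left_commute)
      qed
    qed
    finally show "(\<integral>\<^sup>+x. f (u, (r\<^sup>2 * x - \<alpha> * u) / \<beta>) * ennreal (?n x * ?n ((u - \<alpha> * x) / \<beta>) / \<bar>\<beta>\<bar>) \<partial>lborel)
        = (\<integral>\<^sup>+v. f (u, v) * ennreal (?m u * ?m v) \<partial>lborel)" ..
  qed
  finally show ?thesis .
qed

lemma nd_absscale:
  assumes r: "r > 0" and a: "\<bar>\<alpha>\<bar> = r"
  shows "normal_density 0 r (\<alpha> * x) = normal_density 0 1 x / r"
proof -
  have "(\<alpha> * x)\<^sup>2 = (r * x)\<^sup>2" using a by (metis power2_abs power_mult_distrib)
  then have "normal_density 0 r (\<alpha> * x) = normal_density 0 r (r * x)" by (simp add: normal_density_def)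
  then show ?thesis using nd_scale[OF r] by simp
qed

lemma rot_main0:
  fixes f :: "real \<times> real \<Rightarrow> ennreal"
  assumes f[measurable]: "f \<in> borel_measurable borel"
    and r: "r > 0" and a: "\<bar>\<alpha>\<bar> = r"
  shows "(\<integral>\<^sup>+x. \<integral>\<^sup>+y. f (\<alpha> * x, - \<alpha> * y) * ennreal (normal_density 0 1 x * normal_density 0 1 y) \<partial>lborel \<partial>lborel)
       = (\<integral>\<^sup>+u. \<integral>\<^sup>+v. f (u, v) * ennreal (normal_density 0 r u * normal_density 0 r v) \<partial>lborel \<partial>lborel)"
proof -
  let ?n = "normal_density 0 1" and ?m = "normal_density 0 r"
  have a0: "\<alpha> \<noteq> 0" and a1: "- \<alpha> \<noteq> 0" using a r by auto
  have na: "\<bar>- \<alpha>\<bar> = r" using a by simp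
  have "(\<integral>\<^sup>+u. \<integral>\<^sup>+v. f (u, v) * ennreal (?m u * ?m v) \<partial>lborel \<partial>lborel)
      = ennreal \<bar>\<alpha>\<bar> * (\<integral>\<^sup>+x. (\<lambda>u. \<integral>\<^sup>+v. f (u, v) * ennreal (?m u * ?m v) \<partial>lborel) (0 + \<alpha> * x) \<partial>lborel)"
    by (rule nn_integral_real_affine[OF _ a0]) measurable
  also have "\<dots> = ennreal \<bar>\<alpha>\<bar> * (\<integral>\<^sup>+x. (\<integral>\<^sup>+v. f (\<alpha> * x, v) * ennreal (?m (\<alpha> * x) * ?m v) \<partial>lborel) \<partial>lborel)"
    by simp
  also have "\<dots> = (\<integral>\<^sup>+x. ennreal \<bar>\<alpha>\<bar> * (\<integral>\<^sup>+v. f (\<alpha> * x, v) * ennreal (?m (\<alpha> * x) * ?m v) \<partial>lborel) \<partial>lborel)"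
    by (rule nn_integral_cmult[symmetric]) measurable
  also have "\<dots> = (\<integral>\<^sup>+x. \<integral>\<^sup>+y. f (\<alpha> * x, - \<alpha> * y) * ennreal (?n x * ?n y) \<partial>lborel \<partial>lborel)"
  proof (rule nn_integral_cong)
    fix x :: real
    have "(\<integral>\<^sup>+v. f (\<alpha> * x, v) * ennreal (?m (\<alpha> * x) * ?m v) \<partial>lborel)
       = ennreal \<bar>- \<alpha>\<bar> * (\<integral>\<^sup>+y. f (\<alpha> * x, 0 + - \<alpha> * y) * ennreal (?m (\<alpha> * x) * ?m (0 + - \<alpha> * y)) \<partial>lborel)"
      by (rule nn_integral_real_affine[OF _ a1]) measurable
    then have "ennreal \<bar>\<alpha>\<bar> * (\<integral>\<^sup>+v. f (\<alpha> * x, v) * ennreal (?m (\<alpha> * x) * ?m v) \<partial>lborel)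
       = (\<integral>\<^sup>+y. ennreal \<bar>\<alpha>\<bar> * (ennreal \<bar>- \<alpha>\<bar> * (f (\<alpha> * x, - \<alpha> * y) * ennreal (?m (\<alpha> * x) * ?m (- \<alpha> * y)))) \<partial>lborel)"
      by (simp add: nn_integral_cmult mult.assoc)
    also have "\<dots> = (\<integral>\<^sup>+y. f (\<alpha> * x, - \<alpha> * y) * ennreal (?n x * ?n y) \<partial>lborel)"
    proof (rule nn_integral_cong)
      fix y :: real
      have e: "\<bar>\<alpha>\<bar> * (\<bar>- \<alpha>\<bar> * (?m (\<alpha> * x) * ?m (- \<alpha> * y))) = ?n x * ?n y"
        using nd_absscale[OF r a, of x] nd_absscale[OF r na, of y] a r by simp
      have "ennreal \<bar>\<alpha>\<bar> * (ennreal \<bar>- \<alpha>\<bar> * ennreal (?m (\<alpha> * x) * ?m (- \<alpha> * y))) = ennreal (?n x * ?n y)"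
        unfolding e[symmetric] by (simp add: ennreal_mult)
      then show "ennreal \<bar>\<alpha>\<bar> * (ennreal \<bar>- \<alpha>\<bar> * (f (\<alpha> * x, - \<alpha> * y) * ennreal (?m (\<alpha> * x) * ?m (- \<alpha> * y))))
         = f (\<alpha> * x, - \<alpha> * y) * ennreal (?n x * ?n y)"
        by (metis mult.left_commute)
    qed
    finally show "ennreal \<bar>\<alpha>\<bar> * (\<integral>\<^sup>+v. f (\<alpha> * x, v) * ennreal (?m (\<alpha> * x) * ?m v) \<partial>lborel)
       = (\<integral>\<^sup>+y. f (\<alpha> * x, - \<alpha> * y) * ennreal (?n x * ?n y) \<partial>lborel)" .
  qed
  finally show ?thesis ..
qed

lemma rot_all:
  fixes f :: "real \<times> real \<Rightarrow> ennreal"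
  assumes f[measurable]: "f \<in> borel_measurable borel"
    and r: "r > 0" and ab: "\<alpha>\<^sup>2 + \<beta>\<^sup>2 = r\<^sup>2"
  shows "(\<integral>\<^sup>+x. \<integral>\<^sup>+y. f (\<alpha> * x + \<beta> * y, \<beta> * x - \<alpha> * y) * ennreal (normal_density 0 1 x * normal_density 0 1 y) \<partial>lborel \<partial>lborel)
       = (\<integral>\<^sup>+u. \<integral>\<^sup>+v. f (u, v) * ennreal (normal_density 0 r u * normal_density 0 r v) \<partial>lborel \<partial>lborel)"
proof (cases "\<beta> = 0")
  case True
  then have "\<bar>\<alpha>\<bar> = r" using ab r by (metis add.right_neutral power2_eq_iff_nonneg abs_ge_zero power2_abs zero_power2 less_imp_le)
  with rot_main0[OF f r this] True show ?thesis by simp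
next
  case False
  then show ?thesis by (rule rot_main[OF f r ab])
qed

lemma indep_nn:
  fixes V :: "'w \<Rightarrow> 'a::{second_countable_topology,topological_space}" and W :: "'w \<Rightarrow> 'a"
  assumes P: "prob_space M" and ind: "prob_space.indep_var M borel V borel W"
    and f[measurable]: "f \<in> borel_measurable borel"
  shows "(\<integral>\<^sup>+\<omega>. f (V \<omega>, W \<omega>) \<partial>M) = (\<integral>\<^sup>+\<omega>. \<integral>\<^sup>+\<omega>'. f (V \<omega>, W \<omega>') \<partial>M \<partial>M)"
proof -
  interpret prob_space M by fact
  have [measurable]: "f \<in> borel_measurable (borel \<Otimes>\<^sub>M borel)" using f by (simp add: borel_prod)
  have Vm[measurable]: "V \<in> borel_measurable M" and Wm[measurable]: "W \<in> borel_measurable M"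
    using ind indep_var_rv1 indep_var_rv2 by blast+
  interpret DV: prob_space "distr M borel V" by (rule prob_space_distr) simp
  interpret DW: prob_space "distr M borel W" by (rule prob_space_distr) simp
  have dist: "distr M borel V \<Otimes>\<^sub>M distr M borel W = distr M (borel \<Otimes>\<^sub>M borel) (\<lambda>x. (V x, W x))"
    using ind by (simp add: indep_var_distribution_eq)
  have "(\<integral>\<^sup>+\<omega>. f (V \<omega>, W \<omega>) \<partial>M) = (\<integral>\<^sup>+p. f p \<partial>distr M (borel \<Otimes>\<^sub>M borel) (\<lambda>x. (V x, W x)))"
    by (subst nn_integral_distr) auto
  also have "\<dots> = (\<integral>\<^sup>+p. f p \<partial>(distr M borel V \<Otimes>\<^sub>M distr M borel W))"
    by (simp add: dist)
  also have "\<dots> = (\<integral>\<^sup>+v. \<integral>\<^sup>+w. f (v, w) \<partial>distr M borel W \<partial>distr M borel V)"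
  proof -
    have m: "f \<in> borel_measurable (distr M borel V \<Otimes>\<^sub>M distr M borel W)"
      by measurable
    show ?thesis using DW.nn_integral_fst[OF m] by simp
  qed
  also have "\<dots> = (\<integral>\<^sup>+v. \<integral>\<^sup>+\<omega>'. f (v, W \<omega>') \<partial>M \<partial>distr M borel V)"
    by (intro nn_integral_cong, subst nn_integral_distr) auto
  also have "\<dots> = (\<integral>\<^sup>+\<omega>. \<integral>\<^sup>+\<omega>'. f (V \<omega>, W \<omega>') \<partial>M \<partial>M)"
    by (subst nn_integral_distr) auto
  finally show ?thesis .
qed

lemma gauss2_base:
  assumes P: "prob_space M" and ind: "prob_space.indep_var M borel R borel J"
    and dR: "distributed M lborel R (\<lambda>x. ennreal (std_normal_density x))"
    and dJ: "distributed M lborel J (\<lambda>x. ennreal (std_normal_density x))"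
  shows "gauss2 M (\<lambda>\<omega>. (R \<omega>, J \<omega>)) 1"
  unfolding gauss2_def
proof (intro conjI allI impI)
  interpret prob_space M by fact
  have Rm[measurable]: "R \<in> borel_measurable M" and Jm[measurable]: "J \<in> borel_measurable M"
    using ind indep_var_rv1 indep_var_rv2 by blast+
  show "(\<lambda>\<omega>. (R \<omega>, J \<omega>)) \<in> borel_measurable M" by measurable
  fix f :: "real \<times> real \<Rightarrow> ennreal" assume f[measurable]: "f \<in> borel_measurable borel"
  have "(\<integral>\<^sup>+\<omega>. f (R \<omega>, J \<omega>) \<partial>M) = (\<integral>\<^sup>+\<omega>. \<integral>\<^sup>+\<omega>'. f (R \<omega>, J \<omega>') \<partial>M \<partial>M)"
    by (rule indep_nn[OF P ind]) measurable
  also have "\<dots> = (\<integral>\<^sup>+\<omega>. \<integral>\<^sup>+y. ennreal (std_normal_density y) * f (R \<omega>, y) \<partial>lborel \<partial>M)"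
    by (intro nn_integral_cong distributed_nn_integral[OF dJ, symmetric]) measurable
  also have "\<dots> = (\<integral>\<^sup>+x. ennreal (std_normal_density x) * (\<integral>\<^sup>+y. ennreal (std_normal_density y) * f (x, y) \<partial>lborel) \<partial>lborel)"
    by (rule distributed_nn_integral[OF dR, symmetric]) measurable
  also have "\<dots> = (\<integral>\<^sup>+x. \<integral>\<^sup>+y. f (x, y) * ennreal (normal_density 0 1 x) * ennreal (normal_density 0 1 y) \<partial>lborel \<partial>lborel)"
    by (intro nn_integral_cong, subst nn_integral_cmult[symmetric], measurable,
        intro nn_integral_cong) (simp add: mult_ac)
  finally show "(\<integral>\<^sup>+\<omega>. f (R \<omega>, J \<omega>) \<partial>M) = (\<integral>\<^sup>+x. \<integral>\<^sup>+y. f (x, y) * ennreal (normal_density 0 1 x) * ennreal (normal_density 0 1 y) \<partial>lborel \<partial>lborel)" .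
qed

lemma gauss2_prod_form:
  "(\<integral>\<^sup>+x. \<integral>\<^sup>+y. f (x, y) * ennreal (normal_density 0 s x) * ennreal (normal_density 0 s y) \<partial>lborel \<partial>lborel)
   = (\<integral>\<^sup>+x. \<integral>\<^sup>+y. f (x, y) * ennreal (normal_density 0 s x * normal_density 0 s y) \<partial>lborel \<partial>lborel)"
  by (intro nn_integral_cong) (simp add: ennreal_mult mult.assoc)

lemma gauss2_rot:
  assumes V: "gauss2 M V 1" and r: "r > 0" and ab: "\<alpha>\<^sup>2 + \<beta>\<^sup>2 = r\<^sup>2"
  shows "gauss2 M (\<lambda>\<omega>. (\<alpha> * fst (V \<omega>) + \<beta> * snd (V \<omega>), \<beta> * fst (V \<omega>) - \<alpha> * snd (V \<omega>))) r"
  unfolding gauss2_def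
proof (intro conjI allI impI)
  have Vm[measurable]: "V \<in> borel_measurable M" using V unfolding gauss2_def by auto
  then have [measurable]: "V \<in> M \<rightarrow>\<^sub>M borel \<Otimes>\<^sub>M borel" by (simp add: borel_prod)
  show "(\<lambda>\<omega>. (\<alpha> * fst (V \<omega>) + \<beta> * snd (V \<omega>), \<beta> * fst (V \<omega>) - \<alpha> * snd (V \<omega>))) \<in> borel_measurable M"
    by measurable
  fix f :: "real \<times> real \<Rightarrow> ennreal" assume f[measurable]: "f \<in> borel_measurable borel"
  have "(\<integral>\<^sup>+\<omega>. f (\<alpha> * fst (V \<omega>) + \<beta> * snd (V \<omega>), \<beta> * fst (V \<omega>) - \<alpha> * snd (V \<omega>)) \<partial>M)
     = (\<integral>\<^sup>+x. \<integral>\<^sup>+y. (\<lambda>p. f (\<alpha> * fst p + \<beta> * snd p, \<beta> * fst p - \<alpha> * snd p)) (x, y) * ennreal (normal_density 0 1 x) * ennreal (normal_density 0 1 y) \<partial>lborel \<partial>lborel)"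
    by (rule gauss2D[OF V, where f="\<lambda>p. f (\<alpha> * fst p + \<beta> * snd p, \<beta> * fst p - \<alpha> * snd p)"]) (unfold borel_prod[symmetric], measurable)
  also have "\<dots> = (\<integral>\<^sup>+x. \<integral>\<^sup>+y. f (\<alpha> * x + \<beta> * y, \<beta> * x - \<alpha> * y) * ennreal (normal_density 0 1 x * normal_density 0 1 y) \<partial>lborel \<partial>lborel)"
    by (subst gauss2_prod_form) simp
  also have "\<dots> = (\<integral>\<^sup>+u. \<integral>\<^sup>+v. f (u, v) * ennreal (normal_density 0 r u * normal_density 0 r v) \<partial>lborel \<partial>lborel)"
    by (rule rot_all[OF f r ab])
  also have "\<dots> = (\<integral>\<^sup>+x. \<integral>\<^sup>+y. f (x, y) * ennreal (normal_density 0 r x) * ennreal (normal_density 0 r y) \<partial>lborel \<partial>lborel)"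
    by (rule gauss2_prod_form[symmetric])
  finally show "(\<integral>\<^sup>+\<omega>. f (\<alpha> * fst (V \<omega>) + \<beta> * snd (V \<omega>), \<beta> * fst (V \<omega>) - \<alpha> * snd (V \<omega>)) \<partial>M)
     = (\<integral>\<^sup>+x. \<integral>\<^sup>+y. f (x, y) * ennreal (normal_density 0 r x) * ennreal (normal_density 0 r y) \<partial>lborel \<partial>lborel)" .
qed

lemma even_nn:
  fixes g :: "real \<Rightarrow> ennreal"
  assumes g[measurable]: "g \<in> borel_measurable borel"
  shows "(\<integral>\<^sup>+x. g \<bar>x\<bar> \<partial>lborel) = 2 * (\<integral>\<^sup>+x. g x * indicator {0..} x \<partial>lborel)"
proof -
  have "(\<integral>\<^sup>+x. g \<bar>x\<bar> \<partial>lborel) = (\<integral>\<^sup>+x. g x * indicator {0..} x + g (- x) * indicator {..<0} x \<partial>lborel)"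
    by (rule nn_integral_cong) (auto split: split_indicator)
  also have "\<dots> = (\<integral>\<^sup>+x. g x * indicator {0..} x \<partial>lborel) + (\<integral>\<^sup>+x. g (- x) * indicator {..<0} x \<partial>lborel)"
    by (rule nn_integral_add) measurable
  also have "(\<integral>\<^sup>+x. g (- x) * indicator {..<0} x \<partial>lborel) = (\<integral>\<^sup>+x. g x * indicator {0<..} x \<partial>lborel)"
  proof -
    have "(\<integral>\<^sup>+x. g x * indicator {0<..} x \<partial>lborel) = ennreal \<bar>-1\<bar> * (\<integral>\<^sup>+x. g (0 + -1 * x) * indicator {0<..} (0 + -1 * x) \<partial>lborel)"
      by (rule nn_integral_real_affine) auto
    also have "\<dots> = (\<integral>\<^sup>+x. g (- x) * indicator {..<0} x \<partial>lborel)"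
      by (auto intro!: nn_integral_cong split: split_indicator)
    finally show ?thesis ..
  qed
  also have "(\<integral>\<^sup>+x. g x * indicator {0<..} x \<partial>lborel) = (\<integral>\<^sup>+x. g x * indicator {0..} x \<partial>lborel)"
    by (intro nn_integral_cong_AE eventually_mono[OF AE_lborel_singleton[of 0]]) (auto split: split_indicator)
  finally show ?thesis by (simp add: mult_2)
qed

lemma int_arctan: "(\<integral>\<^sup>+s. ennreal (1 / (1 + s\<^sup>2)) \<partial>lborel) = ennreal pi"
proof -
  have "(\<integral>\<^sup>+s. ennreal (1 / (1 + s\<^sup>2)) \<partial>lborel) = (\<integral>\<^sup>+s. (\<lambda>z. ennreal (1 / (1 + z\<^sup>2))) \<bar>s\<bar> \<partial>lborel)"
    by simp
  also have "\<dots> = 2 * (\<integral>\<^sup>+s. ennreal (1 / (1 + s\<^sup>2)) * indicator {0..} s \<partial>lborel)"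
    by (rule even_nn) measurable
  also have "(\<integral>\<^sup>+s. ennreal (1 / (1 + s\<^sup>2)) * indicator {0..} s \<partial>lborel) = ennreal (pi / 2)"
  proof (subst nn_integral_FTC_atLeast[where F=arctan and T="pi/2"])
    show "(arctan \<longlongrightarrow> pi / 2) at_top" by (rule tendsto_arctan_at_top)
  qed (auto intro!: derivative_eq_intros simp: add_nonneg_eq_0_iff field_simps power2_eq_square)
  also have "2 * ennreal (pi / 2) = ennreal pi"
  proof -
    have "ennreal (2 * (pi / 2)) = ennreal 2 * ennreal (pi / 2)" by (rule ennreal_mult) auto
    then show ?thesis by simp
  qed
  finally show ?thesis .
qed

lemma inner_x:
  assumes c: "c > 0" and t: "t > 0"
  shows "(\<integral>\<^sup>+x. ennreal (\<bar>x\<bar> * exp (- (x\<^sup>2 * c) / 2) / (2 * pi)) * indicator {x. t < x\<^sup>2 * c} x \<partial>lborel)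
       = ennreal (exp (- t / 2) / (pi * c))"
proof -
  define a where "a = sqrt (t / c)"
  have a: "a > 0" using c t by (simp add: a_def)
  have a2: "a\<^sup>2 * c = t" using c t by (simp add: a_def)
  let ?g = "\<lambda>z. ennreal (z * exp (- (z\<^sup>2 * c) / 2) / (2 * pi)) * indicator {x. t < x\<^sup>2 * c} z"
  have "(\<integral>\<^sup>+x. ennreal (\<bar>x\<bar> * exp (- (x\<^sup>2 * c) / 2) / (2 * pi)) * indicator {x. t < x\<^sup>2 * c} x \<partial>lborel)
      = (\<integral>\<^sup>+x. ?g \<bar>x\<bar> \<partial>lborel)"
    by (rule nn_integral_cong) (simp add: indicator_def)
  also have "\<dots> = 2 * (\<integral>\<^sup>+x. ?g x * indicator {0..} x \<partial>lborel)"
    by (rule even_nn) measurable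
  also have "(\<integral>\<^sup>+x. ?g x * indicator {0..} x \<partial>lborel) = (\<integral>\<^sup>+x. ennreal (x * exp (- (x\<^sup>2 * c) / 2) / (2 * pi)) * indicator {a..} x \<partial>lborel)"
  proof (intro nn_integral_cong_AE eventually_mono[OF AE_lborel_singleton[of a]] impI)
    fix x :: real assume xa: "x \<noteq> a"
    have "(0 \<le> x \<and> t < x\<^sup>2 * c) \<longleftrightarrow> a \<le> x"
    proof
      assume h: "0 \<le> x \<and> t < x\<^sup>2 * c"
      then have "a\<^sup>2 < x\<^sup>2" using a2 c by (metis mult_less_cancel_right_pos)
      then show "a \<le> x" using h a by (meson abs_le_square_iff less_imp_le not_le power2_less_imp_less)
    next
      assume h: "a \<le> x"
      then have "a < x" using xa by simp
      then have "a\<^sup>2 < x\<^sup>2" using a by (simp add: power_strict_mono)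
      then have "t < x\<^sup>2 * c" using c a2 by (metis mult_strict_right_mono)
      then show "0 \<le> x \<and> t < x\<^sup>2 * c" using a h by simp
    qed
    then show "?g x * indicator {0..} x = ennreal (x * exp (- (x\<^sup>2 * c) / 2) / (2 * pi)) * indicator {a..} x"
      by (auto simp: indicator_def)
  qed
  also have "\<dots> = ennreal (0 - (- exp (- (a\<^sup>2 * c) / 2) / (2 * pi * c)))"
  proof (rule nn_integral_FTC_atLeast)
    show "((\<lambda>x. - exp (- (x\<^sup>2 * c) / 2) / (2 * pi * c)) \<longlongrightarrow> 0) at_top"
      using c by real_asymp
    fix x :: real assume "a \<le> x"
    then show "0 \<le> x * exp (- (x\<^sup>2 * c) / 2) / (2 * pi)" using a by simp
    show "((\<lambda>x. - exp (- (x\<^sup>2 * c) / 2) / (2 * pi * c)) has_real_derivative x * exp (- (x\<^sup>2 * c) / 2) / (2 * pi)) (at x)"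
      using c by (auto intro!: derivative_eq_intros simp: field_simps power2_eq_square)
  qed measurable
  also have "2 * ennreal (0 - (- exp (- (a\<^sup>2 * c) / 2) / (2 * pi * c))) = ennreal (exp (- t / 2) / (pi * c))"
  proof -
    have "ennreal (2 * (exp (- t / 2) / (2 * pi * c))) = ennreal 2 * ennreal (exp (- t / 2) / (2 * pi * c))"
      by (rule ennreal_mult) (use c in auto)
    then show ?thesis using c by (simp add: a2)
  qed
  finally show ?thesis .
qed

lemma tail2:
  assumes t: "t > 0"
  shows "(\<integral>\<^sup>+x. \<integral>\<^sup>+y. indicator {p. t < (fst p)\<^sup>2 + (snd p)\<^sup>2} (x, y) * ennreal (normal_density 0 1 x) * ennreal (normal_density 0 1 y) \<partial>lborel \<partial>lborel)
       = ennreal (exp (- t / 2))"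
proof -
  define h where "h = (\<lambda>x y::real. ennreal (exp (- ((x\<^sup>2 + y\<^sup>2) / 2)) / (2 * pi)) * indicator {p. t < (fst p)\<^sup>2 + (snd p)\<^sup>2} (x, y))"
  have hm[measurable]: "(\<lambda>(x, y). h x y) \<in> borel_measurable (lborel \<Otimes>\<^sub>M lborel)"
    unfolding h_def by measurable
  have hm2[measurable]: "(\<lambda>z. h (f z) (g z)) \<in> borel_measurable N"
    if [measurable]: "f \<in> borel_measurable N" "g \<in> borel_measurable N" for f g and N :: "'n measure"
  proof -
    have "(\<lambda>z. (f z, g z)) \<in> N \<rightarrow>\<^sub>M lborel \<Otimes>\<^sub>M lborel" by measurable
    from measurable_compose[OF this hm] show ?thesis by simp
  qed
  have "(\<integral>\<^sup>+x. \<integral>\<^sup>+y. indicator {p. t < (fst p)\<^sup>2 + (snd p)\<^sup>2} (x, y) * ennreal (normal_density 0 1 x) * ennreal (normal_density 0 1 y) \<partial>lborel \<partial>lborel)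
      = (\<integral>\<^sup>+x. \<integral>\<^sup>+y. h x y \<partial>lborel \<partial>lborel)"
  proof (intro nn_integral_cong)
    fix x y :: real
    have "ennreal (normal_density 0 1 x) * ennreal (normal_density 0 1 y) = ennreal (normal_density 0 1 x * normal_density 0 1 y)"
      by (rule ennreal_mult[symmetric]) auto
    also have "normal_density 0 1 x * normal_density 0 1 y = exp (- ((x\<^sup>2 + y\<^sup>2) / 2)) / (2 * pi)"
      using nd_prod[of 1 x y] by simp
    finally have eq: "ennreal (normal_density 0 1 x) * ennreal (normal_density 0 1 y) = ennreal (exp (- ((x\<^sup>2 + y\<^sup>2) / 2)) / (2 * pi))" .
    show "indicator {p. t < (fst p)\<^sup>2 + (snd p)\<^sup>2} (x, y) * ennreal (normal_density 0 1 x) * ennreal (normal_density 0 1 y) = h x y"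
      unfolding h_def mult.assoc eq by (rule mult.commute)
  qed
  also have "\<dots> = (\<integral>\<^sup>+x. \<integral>\<^sup>+s. ennreal \<bar>x\<bar> * h x (x * s) \<partial>lborel \<partial>lborel)"
  proof (rule nn_integral_cong_AE)
    have "\<forall>x. x \<noteq> 0 \<longrightarrow> (\<integral>\<^sup>+y. h x y \<partial>lborel) = (\<integral>\<^sup>+s. ennreal \<bar>x\<bar> * h x (x * s) \<partial>lborel)"
    proof (intro allI impI)
    fix x :: real assume x: "x \<noteq> 0"
    have "(\<integral>\<^sup>+y. h x y \<partial>lborel) = ennreal \<bar>x\<bar> * (\<integral>\<^sup>+s. h x (0 + x * s) \<partial>lborel)"
      by (rule nn_integral_real_affine[OF _ x]) measurable
    also have "\<dots> = (\<integral>\<^sup>+s. ennreal \<bar>x\<bar> * h x (x * s) \<partial>lborel)"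
    proof -
      have hx: "(\<lambda>s. h x (x * s)) \<in> borel_measurable lborel" using hm2[of "\<lambda>_. x" lborel "\<lambda>s. x * s"] by simp
      show ?thesis using nn_integral_cmult[OF hx, of "ennreal \<bar>x\<bar>"] by simp
    qed
    finally show "(\<integral>\<^sup>+y. h x y \<partial>lborel) = (\<integral>\<^sup>+s. ennreal \<bar>x\<bar> * h x (x * s) \<partial>lborel)" .
    qed
    then show "AE x in lborel. (\<integral>\<^sup>+y. h x y \<partial>lborel) = (\<integral>\<^sup>+s. ennreal \<bar>x\<bar> * h x (x * s) \<partial>lborel)"
      using AE_lborel_singleton[of 0] by (auto elim: eventually_mono)
  qed
  also have "\<dots> = (\<integral>\<^sup>+s. \<integral>\<^sup>+x. ennreal \<bar>x\<bar> * h x (x * s) \<partial>lborel \<partial>lborel)"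
    by (rule lborel_pair.Fubini'[symmetric]) measurable
  also have "\<dots> = (\<integral>\<^sup>+s. ennreal (exp (- t / 2) / pi) * ennreal (1 / (1 + s\<^sup>2)) \<partial>lborel)"
  proof (rule nn_integral_cong)
    fix s :: real
    have c: "1 + s\<^sup>2 > 0" by (simp add: add_pos_nonneg)
    have "(\<integral>\<^sup>+x. ennreal \<bar>x\<bar> * h x (x * s) \<partial>lborel)
        = (\<integral>\<^sup>+x. ennreal (\<bar>x\<bar> * exp (- (x\<^sup>2 * (1 + s\<^sup>2)) / 2) / (2 * pi)) * indicator {x. t < x\<^sup>2 * (1 + s\<^sup>2)} x \<partial>lborel)"
    proof (rule nn_integral_cong)
      fix x :: real
      have e: "x\<^sup>2 + (x * s)\<^sup>2 = x\<^sup>2 * (1 + s\<^sup>2)" by (simp add: algebra_simps power_mult_distrib)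
      have i: "indicator {p. t < (fst p)\<^sup>2 + (snd p)\<^sup>2} (x, x * s) = (indicator {x. t < x\<^sup>2 * (1 + s\<^sup>2)} x :: ennreal)"
        by (simp add: indicator_def e)
      have a: "ennreal \<bar>x\<bar> * ennreal (exp (- ((x\<^sup>2 + (x * s)\<^sup>2) / 2)) / (2 * pi)) = ennreal (\<bar>x\<bar> * exp (- (x\<^sup>2 * (1 + s\<^sup>2)) / 2) / (2 * pi))"
        by (subst ennreal_mult[symmetric]) (auto simp: e)
      show "ennreal \<bar>x\<bar> * h x (x * s) = ennreal (\<bar>x\<bar> * exp (- (x\<^sup>2 * (1 + s\<^sup>2)) / 2) / (2 * pi)) * indicator {x. t < x\<^sup>2 * (1 + s\<^sup>2)} x"
        unfolding h_def i mult.assoc[symmetric] a ..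
    qed
    also have "\<dots> = ennreal (exp (- t / 2) / (pi * (1 + s\<^sup>2)))"
      by (rule inner_x[OF c t])
    also have "\<dots> = ennreal (exp (- t / 2) / pi) * ennreal (1 / (1 + s\<^sup>2))"
      by (subst ennreal_mult[symmetric]) (use c in auto)
    finally show "(\<integral>\<^sup>+x. ennreal \<bar>x\<bar> * h x (x * s) \<partial>lborel) = ennreal (exp (- t / 2) / pi) * ennreal (1 / (1 + s\<^sup>2))" .
  qed
  also have "\<dots> = ennreal (exp (- t / 2) / pi) * ennreal pi"
    by (subst nn_integral_cmult) (auto simp: int_arctan)
  also have "\<dots> = ennreal (exp (- t / 2))"
    by (subst ennreal_mult[symmetric]) auto
  finally show ?thesis .
qed

lemma hoeff_count:
  fixes Z :: "nat \<Rightarrow> 'w \<Rightarrow> real"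
  assumes P: "prob_space M" and ind: "prob_space.indep_vars M (\<lambda>_. borel) Z {..<N}" and N: "N > 0"
    and p: "\<And>j. j < N \<Longrightarrow> measure M {\<omega> \<in> space M. Z j \<omega> \<le> t} = p" and e: "e \<ge> 0"
  shows "measure M {\<omega> \<in> space M. real (card {j \<in> {..<N}. Z j \<omega> \<le> t}) \<le> real N * p - e} \<le> exp (- 2 * e\<^sup>2 / real N)"
proof -
  interpret prob_space M by fact
  define X where "X = (\<lambda>j \<omega>. if Z j \<omega> \<le> t then 1 else (0::real))"
  have indX: "indep_vars (\<lambda>_. borel) X {..<N}"
    unfolding X_def by (rule indep_vars_compose2[OF ind]) measurable
  have Zm[measurable]: "Z j \<in> borel_measurable M" if "j < N" for j
    using ind that unfolding indep_vars_def by auto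
  interpret HB: indep_interval_bounded_random_variables M "{..<N}" X "\<lambda>_. 0" "\<lambda>_. 1"
  proof (unfold_locales)
    show "finite {..<N}" by simp
    show "indep_vars (\<lambda>_. borel) X {..<N}" by (rule indX)
    fix i assume "i \<in> {..<N}"
    show "AE x in M. X i x \<in> {0..1}" by (rule AE_I2) (simp add: X_def)
  qed
  interpret H: Hoeffding_ineq M "{..<N}" X "\<lambda>_. 0" "\<lambda>_. 1" "\<Sum>j<N. expectation (X j)"
    by unfold_locales simp
  have EX: "expectation (X j) = p" if j: "j < N" for j
  proof -
    have "expectation (X j) = expectation (indicator {\<omega> \<in> space M. Z j \<omega> \<le> t})"
      by (intro Bochner_Integration.integral_cong) (auto simp: X_def indicator_def)
    also have "\<dots> = measure M {\<omega> \<in> space M. Z j \<omega> \<le> t}"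
      by (simp add: Int_absorb2 subset_eq)
    finally show ?thesis using p[OF j] by simp
  qed
  have mu: "(\<Sum>j<N. expectation (X j)) = real N * p" using EX by simp
  have cnt: "(\<Sum>j<N. X j \<omega>) = real (card {j \<in> {..<N}. Z j \<omega> \<le> t})" for \<omega>
  proof -
    have "(\<Sum>j<N. X j \<omega>) = (\<Sum>j\<in>{j \<in> {..<N}. Z j \<omega> \<le> t}. 1)"
      unfolding X_def by (rule sum.inter_filter[symmetric]) simp
    then show ?thesis by simp
  qed
  have "measure M {\<omega> \<in> space M. (\<Sum>j<N. X j \<omega>) \<le> (\<Sum>j<N. expectation (X j)) - e} \<le> exp (- 2 * e\<^sup>2 / (\<Sum>j<N. (1 - 0)\<^sup>2))"
    using H.Hoeffding_ineq_le[OF e] N by simp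
  then show ?thesis by (simp add: cnt mu)
qed

lemma mean_subset:
  fixes f :: "nat \<Rightarrow> real"
  assumes H: "finite H" and IH: "I \<subseteq> H" and I: "I \<noteq> {}"
    and ord: "\<And>i j. i \<in> I \<Longrightarrow> j \<in> H - I \<Longrightarrow> f i \<le> f j"
  shows "(\<Sum>i\<in>I. f i) / real (card I) \<le> (\<Sum>i\<in>H. f i) / real (card H)"
proof -
  have fI: "finite I" using H IH finite_subset by blast
  define c where "c = Max (f ` I)"
  have c1: "f i \<le> c" if "i \<in> I" for i unfolding c_def using fI that by simp
  have c2: "c \<le> f j" if "j \<in> H - I" for j
  proof -
    have "c \<in> f ` I" unfolding c_def using fI I by simp
    then obtain i where "i \<in> I" "c = f i" by auto
    then show ?thesis using ord that by simp
  qed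
  have s1: "(\<Sum>i\<in>I. f i) \<le> real (card I) * c" using sum_bounded_above[of I f c] c1 by simp
  have s2: "real (card (H - I)) * c \<le> (\<Sum>i\<in>H - I. f i)" using sum_bounded_below[of "H - I" c f] c2 by simp
  have sH: "(\<Sum>i\<in>H. f i) = (\<Sum>i\<in>I. f i) + (\<Sum>i\<in>H - I. f i)"
    using sum.subset_diff[OF IH H] by (simp add: add.commute)
  have cH: "real (card H) = real (card I) + real (card (H - I))"
    using card_Diff_subset[OF fI IH] card_mono[OF H IH] by simp
  have pI: "real (card I) > 0" using fI I by (simp add: card_gt_0_iff)
  have pH: "real (card H) > 0" using cH pI by simp
  have "(\<Sum>i\<in>I. f i) * real (card H) = (\<Sum>i\<in>I. f i) * real (card I) + (\<Sum>i\<in>I. f i) * real (card (H - I))"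
    by (simp add: cH algebra_simps)
  also have "\<dots> \<le> (\<Sum>i\<in>I. f i) * real (card I) + real (card I) * c * real (card (H - I))"
    using s1 by (intro add_left_mono mult_right_mono) auto
  also have "\<dots> \<le> (\<Sum>i\<in>I. f i) * real (card I) + real (card I) * (\<Sum>i\<in>H - I. f i)"
    using s2 pI by (simp add: mult.assoc mult.commute[of c] mult_left_mono)
  also have "\<dots> = (\<Sum>i\<in>H. f i) * real (card I)" by (simp add: sH algebra_simps)
  finally show ?thesis using pI pH by (simp add: divide_simps)
qed

lemma det_main:
  fixes b :: "nat \<Rightarrow> real"
  assumes b0: "\<And>i. b i \<ge> 0" and IN: "I \<subseteq> {..<N}" and cI: "card I = m" and m: "m > 0"
    and ord: "\<forall>i\<in>I. \<forall>j\<in>{..<N} - I. b i \<le> b j"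
    and tau: "\<tau> \<ge> 0" and eps: "\<epsilon> > 0" and del: "\<delta> > 0"
    and c1: "real (card (Ihat b N \<tau>)) \<ge> real m - \<epsilon> * real m"
    and c2: "card {j \<in> {..<N}. (b j)\<^sup>2 \<le> \<tau> + \<delta>} \<ge> m"
  shows "(\<Sum>i\<in>I. (b i)\<^sup>2) / real (card I) \<le> (\<Sum>i\<in>Ihat b N \<tau>. (b i)\<^sup>2) / real (card (Ihat b N \<tau>)) + \<epsilon> * (\<tau> + \<delta>)"
proof -
  define H where "H = Ihat b N \<tau>"
  have Hd: "H = {i \<in> {..<N}. (b i)\<^sup>2 \<le> \<tau>}" unfolding H_def Ihat_def by simp
  have fH: "finite H" unfolding Hd by simp
  have fI: "finite I" using IN finite_subset by blast
  have sq: "(b i)\<^sup>2 \<le> (b j)\<^sup>2" if "i \<in> I" "j \<in> {..<N} - I" for i j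
    using ord that b0 by (simp add: power_mono)
  have Inz: "I \<noteq> {}" using cI m by auto
  have Sh0: "(\<Sum>i\<in>H. (b i)\<^sup>2) \<ge> 0" by (simp add: sum_nonneg)
  have rhs0: "\<epsilon> * (\<tau> + \<delta>) \<ge> 0" using eps tau del by simp
  show ?thesis
  proof (cases "card H \<ge> m")
    case True
    have IH: "I \<subseteq> H"
    proof
      fix i assume iI: "i \<in> I"
      show "i \<in> H"
      proof (rule ccontr)
        assume iH: "i \<notin> H"
        then have bi: "(b i)\<^sup>2 > \<tau>" using iI IN unfolding Hd by auto
        have "H \<subseteq> I"
        proof
          fix j assume jH: "j \<in> H"
          show "j \<in> I"
          proof (rule ccontr)
            assume "j \<notin> I"
            then have "(b i)\<^sup>2 \<le> (b j)\<^sup>2" using sq[OF iI] jH unfolding Hd by auto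
            then show False using jH bi unfolding Hd by auto
          qed
        qed
        then have "H = I" using card_subset_eq[OF fI] True cI card_mono[OF fI] by (metis le_antisym)
        then show False using iH iI by simp
      qed
    qed
    have "(\<Sum>i\<in>I. (b i)\<^sup>2) / real (card I) \<le> (\<Sum>i\<in>H. (b i)\<^sup>2) / real (card H)"
    proof (rule mean_subset[OF fH IH Inz])
      fix i j assume "i \<in> I" "j \<in> H - I"
      then show "(b i)\<^sup>2 \<le> (b j)\<^sup>2" using sq Hd by auto
    qed
    then show ?thesis using rhs0 unfolding H_def by linarith
  next
    case False
    have HI: "H \<subseteq> I"
    proof
      fix j assume jH: "j \<in> H"
      show "j \<in> I"
      proof (rule ccontr)
        assume jI: "j \<notin> I"
        have "I \<subseteq> H"
        proof
          fix i assume iI: "i \<in> I"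
          have "(b i)\<^sup>2 \<le> (b j)\<^sup>2" using sq[OF iI] jH jI unfolding Hd by auto
          then show "i \<in> H" using jH iI IN unfolding Hd by auto
        qed
        then have "card I \<le> card H" using card_mono[OF fH] by simp
        then show False using False cI by simp
      qed
    qed
    have bnd: "(b i)\<^sup>2 \<le> \<tau> + \<delta>" if iI: "i \<in> I" for i
    proof (rule ccontr)
      assume bi: "\<not> (b i)\<^sup>2 \<le> \<tau> + \<delta>"
      have "{j \<in> {..<N}. (b j)\<^sup>2 \<le> \<tau> + \<delta>} \<subseteq> I - {i}"
      proof
        fix j assume j: "j \<in> {j \<in> {..<N}. (b j)\<^sup>2 \<le> \<tau> + \<delta>}"
        show "j \<in> I - {i}"
        proof (cases "j \<in> I")
          case True then show ?thesis using j bi by auto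
        next
          case False
          then have "(b i)\<^sup>2 \<le> (b j)\<^sup>2" using sq[OF iI] j by auto
          then show ?thesis using j bi by auto
        qed
      qed
      then have "card {j \<in> {..<N}. (b j)\<^sup>2 \<le> \<tau> + \<delta>} \<le> card (I - {i})"
        using fI by (intro card_mono) auto
      also have "\<dots> = m - 1" using iI cI fI by simp
      finally show False using c2 m by simp
    qed
    define k where "k = card H"
    have km: "k < m" using False k_def by simp
    have sI: "(\<Sum>i\<in>I. (b i)\<^sup>2) = (\<Sum>i\<in>H. (b i)\<^sup>2) + (\<Sum>i\<in>I - H. (b i)\<^sup>2)"
      using sum.subset_diff[OF HI fI] by (simp add: add.commute)
    have cd: "card (I - H) = m - k" using card_Diff_subset[OF fH HI] cI k_def by simp
    have sD: "(\<Sum>i\<in>I - H. (b i)\<^sup>2) \<le> real (m - k) * (\<tau> + \<delta>)"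
      using sum_bounded_above[of "I - H" "\<lambda>i. (b i)\<^sup>2" "\<tau> + \<delta>"] bnd cd by auto
    have mpos: "real m > 0" using m by simp
    have t1: "(\<Sum>i\<in>H. (b i)\<^sup>2) / real m \<le> (\<Sum>i\<in>H. (b i)\<^sup>2) / real k"
    proof (cases "k = 0")
      case True
      then have "H = {}" using fH k_def by simp
      then show ?thesis by simp
    next
      case False
      then show ?thesis using Sh0 km by (intro divide_left_mono) auto
    qed
    have mk: "real (m - k) \<le> \<epsilon> * real m" using c1 km unfolding H_def[symmetric] k_def[symmetric] by (simp add: of_nat_diff)
    have t2: "real (m - k) * (\<tau> + \<delta>) / real m \<le> \<epsilon> * (\<tau> + \<delta>)"
    proof -
      have "real (m - k) * (\<tau> + \<delta>) \<le> \<epsilon> * real m * (\<tau> + \<delta>)"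
        using mk tau del by (intro mult_right_mono) auto
      then show ?thesis using mpos by (simp add: divide_simps mult_ac)
    qed
    have "(\<Sum>i\<in>I. (b i)\<^sup>2) / real (card I) = (\<Sum>i\<in>H. (b i)\<^sup>2) / real m + (\<Sum>i\<in>I - H. (b i)\<^sup>2) / real m"
      using cI by (simp add: sI add_divide_distrib)
    also have "\<dots> \<le> (\<Sum>i\<in>H. (b i)\<^sup>2) / real k + real (m - k) * (\<tau> + \<delta>) / real m"
      using t1 sD mpos by (intro add_mono divide_right_mono) auto
    also have "\<dots> \<le> (\<Sum>i\<in>H. (b i)\<^sup>2) / real k + \<epsilon> * (\<tau> + \<delta>)"
      using t2 by simp
    finally show ?thesis unfolding H_def k_def .
  qed
qed

definition Yv :: "('w \<Rightarrow> nat \<Rightarrow> nat \<Rightarrow> complex) \<Rightarrow> nat \<times> nat \<times> bool \<Rightarrow> 'w \<Rightarrow> real" where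
  "Yv A = (\<lambda>(k, j, re) \<omega>. if re then Re (A \<omega> k j) else Im (A \<omega> k j))"

definition Vc :: "('w \<Rightarrow> nat \<Rightarrow> nat \<Rightarrow> complex) \<Rightarrow> (nat \<Rightarrow> complex) \<Rightarrow> nat \<Rightarrow> nat \<Rightarrow> 'w \<Rightarrow> real \<times> real" where
  "Vc A x0 j m \<omega> = ((\<Sum>k<m. Re (A \<omega> k j) * Re (x0 k) + Im (A \<omega> k j) * Im (x0 k)),
                     (\<Sum>k<m. Re (A \<omega> k j) * Im (x0 k) - Im (A \<omega> k j) * Re (x0 k)))"

definition Fc :: "(nat \<Rightarrow> complex) \<Rightarrow> nat \<Rightarrow> nat \<Rightarrow> (nat \<times> nat \<times> bool \<Rightarrow> real) \<Rightarrow> real \<times> real" where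
  "Fc x0 j m f = ((\<Sum>k<m. f (k, j, True) * Re (x0 k) + f (k, j, False) * Im (x0 k)),
                  (\<Sum>k<m. f (k, j, True) * Im (x0 k) - f (k, j, False) * Re (x0 k)))"

lemma Fc_meas:
  assumes "{..<m} \<times> {j} \<times> UNIV \<subseteq> S"
  shows "Fc x0 j m \<in> PiM S (\<lambda>_. borel) \<rightarrow>\<^sub>M borel"
proof -
  have c: "(\<lambda>f. f (k, j, re)) \<in> borel_measurable (PiM S (\<lambda>_. borel :: real measure))" if "k < m" for k re
    using assms that by (intro measurable_component_singleton) auto
  have "(\<lambda>f. ((\<Sum>k<m. f (k, j, True) * Re (x0 k) + f (k, j, False) * Im (x0 k)),
                  (\<Sum>k<m. f (k, j, True) * Im (x0 k) - f (k, j, False) * Re (x0 k))))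
        \<in> PiM S (\<lambda>_. borel) \<rightarrow>\<^sub>M borel \<Otimes>\<^sub>M borel"
    by (intro measurable_Pair borel_measurable_sum borel_measurable_add borel_measurable_diff borel_measurable_times c borel_measurable_const) auto
  then show ?thesis unfolding Fc_def borel_prod .
qed

lemma Vc_eq:
  assumes "{..<m} \<times> {j} \<times> UNIV \<subseteq> S"
  shows "Vc A x0 j m = (\<lambda>\<omega>. Fc x0 j m (restrict (\<lambda>i. Yv A i \<omega>) S))"
  using assms by (auto simp: Vc_def Fc_def Yv_def fun_eq_iff subset_eq intro!: sum.cong)

context
  fixes M :: "'w measure" and A :: "'w \<Rightarrow> nat \<Rightarrow> nat \<Rightarrow> complex" and n N :: nat
  assumes P: "prob_space M" and G: "iid_complex_gaussian_matrix M A n N"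
begin

interpretation prob_space M by (rule P)

lemma indY: "indep_vars (\<lambda>_. borel) (Yv A) ({..<n} \<times> {..<N} \<times> UNIV)"
  using G unfolding iid_complex_gaussian_matrix_def Yv_def by simp

lemma Yv_meas[measurable]:
  assumes "k < n" "j < N"
  shows "(\<lambda>\<omega>. Re (A \<omega> k j)) \<in> borel_measurable M" "(\<lambda>\<omega>. Im (A \<omega> k j)) \<in> borel_measurable M"
proof -
  have "Yv A (k, j, True) \<in> borel_measurable M" "Yv A (k, j, False) \<in> borel_measurable M"
    using indY assms unfolding indep_vars_def by auto
  then show "(\<lambda>\<omega>. Re (A \<omega> k j)) \<in> borel_measurable M" "(\<lambda>\<omega>. Im (A \<omega> k j)) \<in> borel_measurable M"
    by (simp_all add: Yv_def)
qed

lemma A_meas[measurable]: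
  assumes "k < n" "j < N"
  shows "(\<lambda>\<omega>. A \<omega> k j) \<in> borel_measurable M"
  using Yv_meas[OF assms] by (simp add: borel_measurable_complex_iff)

lemma indep_ReIm:
  assumes "k < n" "j < N"
  shows "indep_var borel (\<lambda>\<omega>. Re (A \<omega> k j)) borel (\<lambda>\<omega>. Im (A \<omega> k j))"
proof -
  have "indep_var (PiM {(k, j, True)} (\<lambda>_. borel)) (\<lambda>\<omega>. restrict (\<lambda>i. Yv A i \<omega>) {(k, j, True)})
                  (PiM {(k, j, False)} (\<lambda>_. borel)) (\<lambda>\<omega>. restrict (\<lambda>i. Yv A i \<omega>) {(k, j, False)})"
    using assms by (intro indep_var_restrict[OF indY]) auto
  then have "indep_var borel ((\<lambda>f. f (k, j, True)) \<circ> (\<lambda>\<omega>. restrict (\<lambda>i. Yv A i \<omega>) {(k, j, True)}))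
                  borel ((\<lambda>f. f (k, j, False)) \<circ> (\<lambda>\<omega>. restrict (\<lambda>i. Yv A i \<omega>) {(k, j, False)}))"
    by (rule indep_var_compose) (auto intro!: measurable_component_singleton)
  then show ?thesis by (simp add: comp_def Yv_def)
qed

lemma indep_Vc:
  assumes "m < n" "j < N"
  shows "indep_var borel (Vc A x0 j m) borel (\<lambda>\<omega>. (Re (A \<omega> m j), Im (A \<omega> m j)))"
proof -
  let ?SA = "{..<m} \<times> {j} \<times> (UNIV :: bool set)" and ?SB = "{m} \<times> {j} \<times> (UNIV :: bool set)"
  have iv: "indep_var (PiM ?SA (\<lambda>_. borel)) (\<lambda>\<omega>. restrict (\<lambda>i. Yv A i \<omega>) ?SA)
                  (PiM ?SB (\<lambda>_. borel)) (\<lambda>\<omega>. restrict (\<lambda>i. Yv A i \<omega>) ?SB)"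
    using assms by (intro indep_var_restrict[OF indY]) auto
  have F: "Fc x0 j m \<in> PiM ?SA (\<lambda>_. borel) \<rightarrow>\<^sub>M borel" by (rule Fc_meas) simp
  have Gm: "(\<lambda>f. (f (m, j, True), f (m, j, False))) \<in> PiM ?SB (\<lambda>_. borel) \<rightarrow>\<^sub>M (borel :: (real \<times> real) measure)"
  proof -
    have "(\<lambda>f. (f (m, j, True), f (m, j, False))) \<in> PiM ?SB (\<lambda>_. borel) \<rightarrow>\<^sub>M (borel \<Otimes>\<^sub>M borel :: (real \<times> real) measure)"
      by (intro measurable_Pair measurable_component_singleton) auto
    then show ?thesis by (simp add: borel_prod)
  qed
  have "indep_var borel (Fc x0 j m \<circ> (\<lambda>\<omega>. restrict (\<lambda>i. Yv A i \<omega>) ?SA))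
      borel ((\<lambda>f. (f (m, j, True), f (m, j, False))) \<circ> (\<lambda>\<omega>. restrict (\<lambda>i. Yv A i \<omega>) ?SB))"
    by (rule indep_var_compose[OF iv F Gm])
  moreover have "Fc x0 j m \<circ> (\<lambda>\<omega>. restrict (\<lambda>i. Yv A i \<omega>) ?SA) = Vc A x0 j m"
    by (subst Vc_eq[where S="?SA"]) (auto simp: comp_def)
  ultimately show ?thesis by (simp add: comp_def Yv_def)
qed

lemma gauss_cell:
  assumes "k < n" "j < N"
  shows "gauss2 M (\<lambda>\<omega>. (Re (A \<omega> k j), Im (A \<omega> k j))) 1"
proof (rule gauss2_base[OF P indep_ReIm[OF assms]])
  show "distributed M lborel (\<lambda>\<omega>. Re (A \<omega> k j)) (\<lambda>x. ennreal (std_normal_density x))"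
    "distributed M lborel (\<lambda>\<omega>. Im (A \<omega> k j)) (\<lambda>x. ennreal (std_normal_density x))"
    using G assms unfolding iid_complex_gaussian_matrix_def by auto
qed

lemma gauss_incr:
  assumes "k < n" "j < N" "x0 k \<noteq> 0"
  shows "gauss2 M (\<lambda>\<omega>. (Re (A \<omega> k j) * Re (x0 k) + Im (A \<omega> k j) * Im (x0 k),
                           Re (A \<omega> k j) * Im (x0 k) - Im (A \<omega> k j) * Re (x0 k))) (cmod (x0 k))"
proof -
  have r: "cmod (x0 k) > 0" using assms by simp
  have ab: "(Re (x0 k))\<^sup>2 + (Im (x0 k))\<^sup>2 = (cmod (x0 k))\<^sup>2" by (simp add: cmod_power2)
  from gauss2_rot[OF gauss_cell[OF assms(1,2)] r ab] show ?thesis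
    by (simp add: mult.commute)
qed

lemma col_gauss:
  assumes j: "j < N"
  shows "m \<le> n \<Longrightarrow> (\<Sum>k<m. (cmod (x0 k))\<^sup>2) > 0 \<Longrightarrow>
         gauss2 M (Vc A x0 j m) (sqrt (\<Sum>k<m. (cmod (x0 k))\<^sup>2))"
proof (induction m)
  case 0
  then show ?case by simp
next
  case (Suc m)
  define D where "D = (\<lambda>\<omega>. (Re (A \<omega> m j) * Re (x0 m) + Im (A \<omega> m j) * Im (x0 m),
                           Re (A \<omega> m j) * Im (x0 m) - Im (A \<omega> m j) * Re (x0 m)))"
  have split: "Vc A x0 j (Suc m) = (\<lambda>\<omega>. Vc A x0 j m \<omega> + D \<omega>)"
    by (simp add: Vc_def D_def fun_eq_iff)
  have mn: "m < n" using Suc.prems by simp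
  show ?case
  proof (cases "x0 m = 0")
    case True
    then have "D = (\<lambda>_. 0)" by (simp add: D_def fun_eq_iff zero_prod_def)
    then have "Vc A x0 j (Suc m) = Vc A x0 j m" using split by simp
    moreover have "(\<Sum>k<Suc m. (cmod (x0 k))\<^sup>2) = (\<Sum>k<m. (cmod (x0 k))\<^sup>2)" using True by simp
    ultimately show ?thesis using Suc by simp
  next
    case False
    have gD: "gauss2 M D (cmod (x0 m))" unfolding D_def by (rule gauss_incr[of m j x0, OF mn j False])
    have r: "cmod (x0 m) > 0" using False by simp
    show ?thesis
    proof (cases "(\<Sum>k<m. (cmod (x0 k))\<^sup>2) > 0")
      case True
      have IH: "gauss2 M (Vc A x0 j m) (sqrt (\<Sum>k<m. (cmod (x0 k))\<^sup>2))"
        using Suc.IH Suc.prems True by simp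
      have ind0: "indep_var borel (Vc A x0 j m) borel (\<lambda>\<omega>. (Re (A \<omega> m j), Im (A \<omega> m j)))"
        by (rule indep_Vc[OF mn j])
      have rotm: "(\<lambda>p::real \<times> real. (fst p * Re (x0 m) + snd p * Im (x0 m), fst p * Im (x0 m) - snd p * Re (x0 m))) \<in> borel_measurable borel"
        unfolding borel_prod[symmetric] by measurable
      have "indep_var borel (id \<circ> Vc A x0 j m) borel ((\<lambda>p::real \<times> real. (fst p * Re (x0 m) + snd p * Im (x0 m), fst p * Im (x0 m) - snd p * Re (x0 m))) \<circ> (\<lambda>\<omega>. (Re (A \<omega> m j), Im (A \<omega> m j))))"
        by (rule indep_var_compose[OF ind0 _ rotm]) simp
      then have ind: "indep_var borel (Vc A x0 j m) borel D" by (simp add: comp_def D_def)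
      have "gauss2 M (\<lambda>\<omega>. Vc A x0 j m \<omega> + D \<omega>) (sqrt ((sqrt (\<Sum>k<m. (cmod (x0 k))\<^sup>2))\<^sup>2 + (cmod (x0 m))\<^sup>2))"
        by (rule gauss2_add[OF P IH gD ind]) (use True r in auto)
      moreover have "(sqrt (\<Sum>k<m. (cmod (x0 k))\<^sup>2))\<^sup>2 + (cmod (x0 m))\<^sup>2 = (\<Sum>k<Suc m. (cmod (x0 k))\<^sup>2)"
        using True by simp
      ultimately show ?thesis using split by simp
    next
      case False
      have s0: "(\<Sum>k<m. (cmod (x0 k))\<^sup>2) = 0"
        using False sum_nonneg[of "{..<m}" "\<lambda>k. (cmod (x0 k))\<^sup>2"] by simp
      have z: "\<forall>k<m. x0 k = 0"
      proof (intro allI impI)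
        fix k assume "k < m"
        then have "(cmod (x0 k))\<^sup>2 = 0" using s0 sum_nonneg_eq_0_iff[of "{..<m}" "\<lambda>k. (cmod (x0 k))\<^sup>2"] by simp
        then show "x0 k = 0" by simp
      qed
      then have "Vc A x0 j m = (\<lambda>_. 0)" by (simp add: Vc_def fun_eq_iff zero_prod_def)
      then have "Vc A x0 j (Suc m) = D" using split by simp
      moreover have "(\<Sum>k<Suc m. (cmod (x0 k))\<^sup>2) = (cmod (x0 m))\<^sup>2" using z by simp
      ultimately show ?thesis using gD r by simp
    qed
  qed
qed

end

lemma bsq_eq: "(bval n (A \<omega>) x0 j)\<^sup>2 = (fst (Vc A x0 j n \<omega>))\<^sup>2 + (snd (Vc A x0 j n \<omega>))\<^sup>2"
  unfolding bval_def Vc_def by (simp add: cmod_power2 Re_sum Im_sum)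

context
  fixes M :: "'w measure" and A :: "'w \<Rightarrow> nat \<Rightarrow> nat \<Rightarrow> complex" and n N :: nat
  assumes P: "prob_space M" and G: "iid_complex_gaussian_matrix M A n N"
begin

interpretation prob_space M by (rule P)

lemma bval_meas[measurable]:
  assumes j: "j < N"
  shows "(\<lambda>\<omega>. bval n (A \<omega>) x0 j) \<in> borel_measurable M"
proof -
  have borel_measurable_cnj: "cnj \<in> borel_measurable borel"
    by (intro borel_measurable_continuous_onI continuous_intros)
  have "(\<lambda>\<omega>. \<Sum>k<n. cnj (A \<omega> k j) * x0 k) \<in> borel_measurable M"
    by (intro borel_measurable_sum borel_measurable_times borel_measurable_const
        measurable_compose[OF A_meas[OF P G _ j] borel_measurable_cnj]) auto
  then show ?thesis unfolding bval_def by measurable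
qed

lemma tail_col:
  assumes j: "j < N" and x0: "cvec_norm n x0 = 1" and t: "t > 0"
  shows "measure M {\<omega> \<in> space M. (bval n (A \<omega>) x0 j)\<^sup>2 \<le> t} = 1 - exp (- t / 2)"
proof -
  have s1: "(\<Sum>k<n. (cmod (x0 k))\<^sup>2) = 1"
    using x0 unfolding cvec_norm_def by simp
  have g: "gauss2 M (Vc A x0 j n) 1"
    using col_gauss[OF P G j, of n x0] s1 by simp
  have Vm[measurable]: "Vc A x0 j n \<in> borel_measurable M" using g unfolding gauss2_def by simp
  let ?S = "{p :: real \<times> real. t < (fst p)\<^sup>2 + (snd p)\<^sup>2}"
  have Sm: "?S \<in> sets borel" by (intro borel_open open_Collect_less continuous_intros)
  have "emeasure M {\<omega> \<in> space M. t < (bval n (A \<omega>) x0 j)\<^sup>2} = emeasure M (Vc A x0 j n -` ?S \<inter> space M)"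
    by (intro arg_cong[where f="emeasure M"]) (auto simp: bsq_eq)
  also have "\<dots> = (\<integral>\<^sup>+\<omega>. indicator ?S (Vc A x0 j n \<omega>) \<partial>M)"
  proof -
    have "(\<integral>\<^sup>+\<omega>. indicator ?S (Vc A x0 j n \<omega>) \<partial>M) = (\<integral>\<^sup>+\<omega>. indicator (Vc A x0 j n -` ?S \<inter> space M) \<omega> \<partial>M)"
      by (rule nn_integral_cong) (simp add: indicator_def)
    also have "\<dots> = emeasure M (Vc A x0 j n -` ?S \<inter> space M)"
      by (rule nn_integral_indicator[OF measurable_sets[OF Vm Sm]])
    finally show ?thesis ..
  qed
  also have "\<dots> = (\<integral>\<^sup>+x. \<integral>\<^sup>+y. indicator ?S (x, y) * ennreal (normal_density 0 1 x) * ennreal (normal_density 0 1 y) \<partial>lborel \<partial>lborel)"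
    by (rule gauss2D[OF g]) (use Sm in simp)
  also have "\<dots> = ennreal (exp (- t / 2))" by (rule tail2[OF t])
  finally have e: "emeasure M {\<omega> \<in> space M. t < (bval n (A \<omega>) x0 j)\<^sup>2} = ennreal (exp (- t / 2))" .
  have ev: "{\<omega> \<in> space M. t < (bval n (A \<omega>) x0 j)\<^sup>2} \<in> events" using j by measurable
  have "measure M {\<omega> \<in> space M. t < (bval n (A \<omega>) x0 j)\<^sup>2} = exp (- t / 2)"
    using e by (simp add: measure_def)
  moreover have "{\<omega> \<in> space M. (bval n (A \<omega>) x0 j)\<^sup>2 \<le> t} = space M - {\<omega> \<in> space M. t < (bval n (A \<omega>) x0 j)\<^sup>2}"
    by auto
  ultimately show ?thesis using prob_compl[OF ev] by simp
qed

lemma indep_cols: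
  "indep_vars (\<lambda>_. borel) (\<lambda>j \<omega>. (bval n (A \<omega>) x0 j)\<^sup>2) {..<N}"
proof -
  let ?K = "\<lambda>j. {..<n} \<times> {j} \<times> (UNIV :: bool set)"
  have iv: "indep_vars (\<lambda>j. PiM (?K j) (\<lambda>_. borel)) (\<lambda>j \<omega>. restrict (\<lambda>i. Yv A i \<omega>) (?K j)) {..<N}"
    by (rule indep_vars_restrict[OF indY[OF P G]]) (auto simp: disjoint_family_on_def)
  define H where "H = (\<lambda>j f. (fst (Fc x0 j n f))\<^sup>2 + (snd (Fc x0 j n f))\<^sup>2)"
  have Hm: "H j \<in> PiM (?K j) (\<lambda>_. borel) \<rightarrow>\<^sub>M borel" for j
  proof -
    have [measurable]: "Fc x0 j n \<in> PiM (?K j) (\<lambda>_. borel) \<rightarrow>\<^sub>M borel \<Otimes>\<^sub>M borel"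
      using Fc_meas[of n j "?K j" x0] by (simp add: borel_prod)
    show ?thesis unfolding H_def by measurable
  qed
  have "indep_vars (\<lambda>_. borel) (\<lambda>j \<omega>. H j (restrict (\<lambda>i. Yv A i \<omega>) (?K j))) {..<N}"
    by (rule indep_vars_compose2[OF iv Hm])
  moreover have "(\<lambda>\<omega>. H j (restrict (\<lambda>i. Yv A i \<omega>) (?K j))) = (\<lambda>\<omega>. (bval n (A \<omega>) x0 j)\<^sup>2)" for j
    unfolding H_def bsq_eq Vc_eq[of n j "?K j" A x0, OF subset_refl] by simp
  ultimately show ?thesis by simp
qed

end

lemma Ihat_sum: "(\<Sum>i\<in>Ihat b N \<tau>. f i) = (\<Sum>i<N. if (b i)\<^sup>2 \<le> \<tau> then f i else 0)"
  unfolding Ihat_def by (rule sum.inter_filter) simp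

lemma Ihat_card: "real (card (Ihat b N \<tau>)) = (\<Sum>i<N. if (b i)\<^sup>2 \<le> \<tau> then 1 else 0)"
proof -
  have "real (card (Ihat b N \<tau>)) = (\<Sum>i\<in>Ihat b N \<tau>. 1)" by simp
  also have "\<dots> = (\<Sum>i<N. if (b i)\<^sup>2 \<le> \<tau> then 1 else 0)" by (rule Ihat_sum)
  finally show ?thesis .
qed

lemma all_pow_conj: "(\<forall>I. I \<subseteq> X \<and> P I \<longrightarrow> Q I) = (\<forall>I\<in>Pow X. P I \<longrightarrow> Q I)"
  by auto

lemma good_meas:
  fixes bb :: "'w \<Rightarrow> nat \<Rightarrow> real"
  assumes bb[measurable]: "\<And>i. (\<lambda>\<omega>. bb \<omega> i) \<in> borel_measurable M"
  shows "{\<omega> \<in> space M. \<forall>I. I \<subseteq> {..<N} \<and> card I = m \<and> (\<forall>i\<in>I. \<forall>j\<in>{..<N} - I. bb \<omega> i \<le> bb \<omega> j)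
             \<longrightarrow> (\<Sum>i\<in>I. (bb \<omega> i)\<^sup>2) / real (card I)
                 \<le> (\<Sum>i\<in>Ihat (bb \<omega>) N \<tau>. (bb \<omega> i)\<^sup>2) / real (card (Ihat (bb \<omega>) N \<tau>)) + c} \<in> sets M"
proof -
  have eq: "{\<omega> \<in> space M. \<forall>I. I \<subseteq> {..<N} \<and> card I = m \<and> (\<forall>i\<in>I. \<forall>j\<in>{..<N} - I. bb \<omega> i \<le> bb \<omega> j)
             \<longrightarrow> (\<Sum>i\<in>I. (bb \<omega> i)\<^sup>2) / real (card I)
                 \<le> (\<Sum>i\<in>Ihat (bb \<omega>) N \<tau>. (bb \<omega> i)\<^sup>2) / real (card (Ihat (bb \<omega>) N \<tau>)) + c}
    = {\<omega> \<in> space M. \<forall>I\<in>Pow {..<N}. card I = m \<and> (\<forall>i\<in>I. \<forall>j\<in>{..<N} - I. bb \<omega> i \<le> bb \<omega> j)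
             \<longrightarrow> (\<Sum>i\<in>I. (bb \<omega> i)\<^sup>2) / real (card I)
                 \<le> (\<Sum>i<N. if (bb \<omega> i)\<^sup>2 \<le> \<tau> then (bb \<omega> i)\<^sup>2 else 0) / (\<Sum>i<N. if (bb \<omega> i)\<^sup>2 \<le> \<tau> then 1 else 0) + c}"
    by (simp only: Ihat_sum Ihat_card all_pow_conj)
  show ?thesis unfolding eq
  proof (rule sets.sets_Collect_finite_All)
    fix I assume IP: "I \<in> Pow {..<N}"
    have fI: "finite I" using IP finite_subset by auto
    have [measurable]: "(\<lambda>\<omega>. \<Sum>i\<in>I. (bb \<omega> i)\<^sup>2) \<in> borel_measurable M" by measurable
    have [measurable]: "(\<lambda>\<omega>. \<Sum>i<N. if (bb \<omega> i)\<^sup>2 \<le> \<tau> then (bb \<omega> i)\<^sup>2 else 0) \<in> borel_measurable M" by measurable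
    have [measurable]: "(\<lambda>\<omega>. \<Sum>i<N. if (bb \<omega> i)\<^sup>2 \<le> \<tau> then 1 else (0::real)) \<in> borel_measurable M" by measurable
    have ordS: "{\<omega> \<in> space M. \<forall>i\<in>I. \<forall>j\<in>{..<N} - I. bb \<omega> i \<le> bb \<omega> j} \<in> sets M"
    proof (rule sets.sets_Collect_finite_All[OF _ fI])
      fix i assume "i \<in> I"
      show "{\<omega> \<in> space M. \<forall>j\<in>{..<N} - I. bb \<omega> i \<le> bb \<omega> j} \<in> sets M"
      proof (rule sets.sets_Collect_finite_All)
        fix j assume "j \<in> {..<N} - I"
        show "{\<omega> \<in> space M. bb \<omega> i \<le> bb \<omega> j} \<in> sets M" by measurable
      qed simp
    qed
    then have [measurable]: "Measurable.pred M (\<lambda>\<omega>. \<forall>i\<in>I. \<forall>j\<in>{..<N} - I. bb \<omega> i \<le> bb \<omega> j)"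
      by (simp add: pred_def)
    show "{\<omega> \<in> space M. card I = m \<and> (\<forall>i\<in>I. \<forall>j\<in>{..<N} - I. bb \<omega> i \<le> bb \<omega> j)
             \<longrightarrow> (\<Sum>i\<in>I. (bb \<omega> i)\<^sup>2) / real (card I)
                 \<le> (\<Sum>i<N. if (bb \<omega> i)\<^sup>2 \<le> \<tau> then (bb \<omega> i)\<^sup>2 else 0) / (\<Sum>i<N. if (bb \<omega> i)\<^sup>2 \<le> \<tau> then 1 else 0) + c} \<in> sets M"
    proof (intro sets.sets_Collect_imp sets.sets_Collect_conj sets.sets_Collect_const)
      show "{\<omega> \<in> space M. \<forall>i\<in>I. \<forall>j\<in>{..<N} - I. bb \<omega> i \<le> bb \<omega> j} \<in> sets M" by (rule ordS)
      show "{\<omega> \<in> space M. (\<Sum>i\<in>I. (bb \<omega> i)\<^sup>2) / real (card I)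
                 \<le> (\<Sum>i<N. if (bb \<omega> i)\<^sup>2 \<le> \<tau> then (bb \<omega> i)\<^sup>2 else 0) / (\<Sum>i<N. if (bb \<omega> i)\<^sup>2 \<le> \<tau> then 1 else 0) + c} \<in> sets M"
      proof (rule borel_measurable_le)
        have m1: "(\<lambda>\<omega>. \<Sum>i\<in>I. (bb \<omega> i)\<^sup>2) \<in> borel_measurable M" by measurable
        show "(\<lambda>\<omega>. (\<Sum>i\<in>I. (bb \<omega> i)\<^sup>2) / real (card I)) \<in> borel_measurable M"
          by (rule borel_measurable_divide[OF m1 borel_measurable_const])
        have m2: "(\<lambda>\<omega>. \<Sum>i<N. if (bb \<omega> i)\<^sup>2 \<le> \<tau> then (bb \<omega> i)\<^sup>2 else 0) \<in> borel_measurable M" by measurable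
        have m3: "(\<lambda>\<omega>. \<Sum>i<N. if (bb \<omega> i)\<^sup>2 \<le> \<tau> then 1 else (0::real)) \<in> borel_measurable M" by measurable
        show "(\<lambda>\<omega>. (\<Sum>i<N. if (bb \<omega> i)\<^sup>2 \<le> \<tau> then (bb \<omega> i)\<^sup>2 else 0) / (\<Sum>i<N. if (bb \<omega> i)\<^sup>2 \<le> \<tau> then 1 else 0) + c) \<in> borel_measurable M"
          by (rule borel_measurable_add[OF borel_measurable_divide[OF m2 m3] borel_measurable_const])
      qed
    qed
  qed simp
qed

lemma exp_bound: "(\<delta>::real) > 0 \<Longrightarrow> (\<delta> / 2) * exp (- \<delta> / 2) \<le> 1 - exp (- \<delta> / 2)"
proof -
  assume d: "\<delta> > 0"
  have "1 + \<delta> / 2 \<le> exp (\<delta> / 2)" by (rule exp_ge_add_one_self)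
  then have "(1 + \<delta> / 2) * exp (- \<delta> / 2) \<le> exp (\<delta> / 2) * exp (- \<delta> / 2)"
    by (intro mult_right_mono) auto
  also have "exp (\<delta> / 2) * exp (- \<delta> / 2) = 1" by (simp add: exp_minus_inverse)
  finally show ?thesis by (simp add: algebra_simps)
qed

lemma good_cong:
  fixes b b' :: "nat \<Rightarrow> real"
  assumes bb: "\<And>i. i < N \<Longrightarrow> b i = b' i"
  shows "(\<forall>I. I \<subseteq> {..<N} \<and> card I = m \<and> (\<forall>i\<in>I. \<forall>j\<in>{..<N} - I. b i \<le> b j)
            \<longrightarrow> (\<Sum>i\<in>I. (b i)\<^sup>2) / real (card I) \<le> (\<Sum>i\<in>Ihat b N \<tau>. (b i)\<^sup>2) / real (card (Ihat b N \<tau>)) + c)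
       = (\<forall>I. I \<subseteq> {..<N} \<and> card I = m \<and> (\<forall>i\<in>I. \<forall>j\<in>{..<N} - I. b' i \<le> b' j)
            \<longrightarrow> (\<Sum>i\<in>I. (b' i)\<^sup>2) / real (card I) \<le> (\<Sum>i\<in>Ihat b' N \<tau>. (b' i)\<^sup>2) / real (card (Ihat b' N \<tau>)) + c)"
proof -
  have Ih: "Ihat b N \<tau> = Ihat b' N \<tau>" using bb by (auto simp: Ihat_def)
  have s1: "(\<Sum>i\<in>Ihat b' N \<tau>. (b i)\<^sup>2) = (\<Sum>i\<in>Ihat b' N \<tau>. (b' i)\<^sup>2)"
    by (rule sum.cong) (auto simp: Ihat_def bb)
  have s2: "(\<Sum>i\<in>I. (b i)\<^sup>2) = (\<Sum>i\<in>I. (b' i)\<^sup>2)" if "I \<subseteq> {..<N}" for I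
    using that by (intro sum.cong) (auto simp: bb subset_eq)
  have o: "(\<forall>i\<in>I. \<forall>j\<in>{..<N} - I. b i \<le> b j) = (\<forall>i\<in>I. \<forall>j\<in>{..<N} - I. b' i \<le> b' j)" if "I \<subseteq> {..<N}" for I
    using that bb by (auto simp: subset_eq)
  show ?thesis unfolding Ih s1
  proof (intro iffI allI impI)
    fix I assume h: "\<forall>I. I \<subseteq> {..<N} \<and> card I = m \<and> (\<forall>i\<in>I. \<forall>j\<in>{..<N} - I. b i \<le> b j)
            \<longrightarrow> (\<Sum>i\<in>I. (b i)\<^sup>2) / real (card I) \<le> (\<Sum>i\<in>Ihat b' N \<tau>. (b' i)\<^sup>2) / real (card (Ihat b' N \<tau>)) + c"
      and c: "I \<subseteq> {..<N} \<and> card I = m \<and> (\<forall>i\<in>I. \<forall>j\<in>{..<N} - I. b' i \<le> b' j)"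
    then show "(\<Sum>i\<in>I. (b' i)\<^sup>2) / real (card I) \<le> (\<Sum>i\<in>Ihat b' N \<tau>. (b' i)\<^sup>2) / real (card (Ihat b' N \<tau>)) + c"
      using s2[of I] o[of I] by auto
  next
    fix I assume h: "\<forall>I. I \<subseteq> {..<N} \<and> card I = m \<and> (\<forall>i\<in>I. \<forall>j\<in>{..<N} - I. b' i \<le> b' j)
            \<longrightarrow> (\<Sum>i\<in>I. (b' i)\<^sup>2) / real (card I) \<le> (\<Sum>i\<in>Ihat b' N \<tau>. (b' i)\<^sup>2) / real (card (Ihat b' N \<tau>)) + c"
      and c: "I \<subseteq> {..<N} \<and> card I = m \<and> (\<forall>i\<in>I. \<forall>j\<in>{..<N} - I. b i \<le> b j)"
    then show "(\<Sum>i\<in>I. (b i)\<^sup>2) / real (card I) \<le> (\<Sum>i\<in>Ihat b' N \<tau>. (b' i)\<^sup>2) / real (card (Ihat b' N \<tau>)) + c"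
      using s2[of I] o[of I] by auto
  qed
qed

theorem proposition5:
  fixes M :: "'w measure" and A :: "'w \<Rightarrow> nat \<Rightarrow> nat \<Rightarrow> complex"
    and x0 :: "nat \<Rightarrow> complex" and n N m :: nat and \<epsilon> \<delta> :: real
  assumes "prob_space M"
    and "iid_complex_gaussian_matrix M A n N"
    and "cvec_norm n x0 = 1"
    and "m < N"
    and "\<epsilon> > 0" and "\<delta> > 0"
  shows "measure M {\<omega> \<in> space M.
           \<forall>I. I \<subseteq> {..<N} \<and> card I = m
               \<and> (\<forall>i\<in>I. \<forall>j\<in>{..<N} - I. bval n (A \<omega>) x0 i \<le> bval n (A \<omega>) x0 j)
             \<longrightarrow> (\<Sum>i\<in>I. (bval n (A \<omega>) x0 i)\<^sup>2) / real (card I)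
                 \<le> (\<Sum>i\<in>Ihat (bval n (A \<omega>) x0) N (tau_star m N). (bval n (A \<omega>) x0 i)\<^sup>2)
                     / real (card (Ihat (bval n (A \<omega>) x0) N (tau_star m N)))
                   + \<epsilon> * (tau_star m N + \<delta>)}
         \<ge> 1 - 2 * exp (- (1/2) * \<delta>\<^sup>2 * exp (- \<delta>) * \<bar>1 - real m / real N\<bar>\<^sup>2 * real N)
             - 2 * exp (- 2 * \<epsilon>\<^sup>2 * \<bar>1 - real m / real N\<bar>\<^sup>2 * (real m)\<^sup>2 / real N)"
proof -
  note P = assms(1) and G = assms(2) and x0 = assms(3) and mN = assms(4) and eps = assms(5) and del = assms(6)
  interpret prob_space M by (rule P)
  define \<tau> where "\<tau> = tau_star m N"
  define Good where "Good = {\<omega> \<in> space M.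
           \<forall>I. I \<subseteq> {..<N} \<and> card I = m
               \<and> (\<forall>i\<in>I. \<forall>j\<in>{..<N} - I. bval n (A \<omega>) x0 i \<le> bval n (A \<omega>) x0 j)
             \<longrightarrow> (\<Sum>i\<in>I. (bval n (A \<omega>) x0 i)\<^sup>2) / real (card I)
                 \<le> (\<Sum>i\<in>Ihat (bval n (A \<omega>) x0) N \<tau>. (bval n (A \<omega>) x0 i)\<^sup>2)
                     / real (card (Ihat (bval n (A \<omega>) x0) N \<tau>))
                   + \<epsilon> * (\<tau> + \<delta>)}"
  define R where "R = 1 - 2 * exp (- (1/2) * \<delta>\<^sup>2 * exp (- \<delta>) * \<bar>1 - real m / real N\<bar>\<^sup>2 * real N)
             - 2 * exp (- 2 * \<epsilon>\<^sup>2 * \<bar>1 - real m / real N\<bar>\<^sup>2 * (real m)\<^sup>2 / real N)"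
  have N: "N > 0" using mN by simp
  define q where "q = 1 - real m / real N"
  have q0: "q > 0" and q1: "q \<le> 1" using mN N by (auto simp: q_def field_simps)
  have tau_eq: "\<tau> = - 2 * ln q" unfolding \<tau>_def tau_star_def q_def ..
  have tau0: "\<tau> \<ge> 0" using q0 q1 tau_eq by simp
  have etau: "exp (- \<tau> / 2) = q" using q0 tau_eq by simp
  have gen: "\<And>a b::real. 1 - 2 * exp a - 2 * exp b \<le> 1"
    by (smt (verit) exp_ge_zero)
  have R1: "R \<le> 1" unfolding R_def by (rule gen)
  have "measure M Good \<ge> R"
  proof (cases "m = 0")
    case True
    have "Good = space M"
    proof -
      have "(\<Sum>i\<in>I. (bval n (A \<omega>) x0 i)\<^sup>2) / real (card I)
                 \<le> (\<Sum>i\<in>Ihat (bval n (A \<omega>) x0) N \<tau>. (bval n (A \<omega>) x0 i)\<^sup>2)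
                     / real (card (Ihat (bval n (A \<omega>) x0) N \<tau>)) + \<epsilon> * (\<tau> + \<delta>)"
        if "I \<subseteq> {..<N}" "card I = m" for I \<omega>
      proof -
        have "finite I" using that finite_subset by blast
        then have "I = {}" using that True by simp
        moreover have "0 \<le> (\<Sum>i\<in>Ihat (bval n (A \<omega>) x0) N \<tau>. (bval n (A \<omega>) x0 i)\<^sup>2) / real (card (Ihat (bval n (A \<omega>) x0) N \<tau>))"
          by (simp add: sum_nonneg)
        moreover have "0 \<le> \<epsilon> * (\<tau> + \<delta>)" using eps del tau0 by simp
        ultimately show ?thesis by simp
      qed
      then show ?thesis unfolding Good_def by auto
    qed
    then show ?thesis using R1 prob_space by simp
  next
    case False
    then have m0: "m > 0" by simp
    have qlt: "q < 1" using m0 N by (simp add: q_def)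
    have taupos: "\<tau> > 0" using tau_eq q0 qlt by (simp add: ln_less_zero_iff)
    define b where "b = (\<lambda>\<omega>. bval n (A \<omega>) x0)"
    define bb where "bb = (\<lambda>\<omega> i. if i < N then b \<omega> i else 0)"
    have bbm[measurable]: "(\<lambda>\<omega>. bb \<omega> i) \<in> borel_measurable M" for i
    proof (cases "i < N")
      case True
      then show ?thesis unfolding bb_def b_def using bval_meas[OF P G True, of x0] by simp
    next
      case False
      then show ?thesis unfolding bb_def by simp
    qed
    have bbeq: "i < N \<Longrightarrow> bb \<omega> i = b \<omega> i" for i \<omega> by (simp add: bb_def)
    define Z where "Z = (\<lambda>j \<omega>. (b \<omega> j)\<^sup>2)"
    have indZ: "indep_vars (\<lambda>_. borel) Z {..<N}"
      unfolding Z_def b_def by (rule indep_cols[OF P G])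
    have cardZ: "{j \<in> {..<N}. Z j \<omega> \<le> t} = Ihat (b \<omega>) N t" for \<omega> t
      by (simp add: Z_def Ihat_def)
    have p1: "measure M {\<omega> \<in> space M. Z j \<omega> \<le> \<tau>} = 1 - q" if "j < N" for j
      using tail_col[OF P G that x0 taupos] etau by (simp add: Z_def b_def)
    have p2: "measure M {\<omega> \<in> space M. Z j \<omega> \<le> \<tau> + \<delta>} = 1 - q * exp (- \<delta> / 2)" if "j < N" for j
    proof -
      have "exp (- (\<tau> + \<delta>) / 2) = exp (- \<tau> / 2) * exp (- \<delta> / 2)"
        by (simp add: exp_add[symmetric] field_simps)
      then show ?thesis
        using tail_col[OF P G that x0, of "\<tau> + \<delta>"] taupos del etau by (simp add: Z_def b_def)
    qed
    define e0 where "e0 = real N * q * (1 - exp (- \<delta> / 2))"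
    have ed1: "exp (- \<delta> / 2) \<le> 1" using del by simp
    have e00: "e0 \<ge> 0" using q0 ed1 unfolding e0_def by simp
    define Bad1 where "Bad1 = {\<omega> \<in> space M. real (card {j \<in> {..<N}. Z j \<omega> \<le> \<tau>}) \<le> real N * (1 - q) - \<epsilon> * real m}"
    define Bad2 where "Bad2 = {\<omega> \<in> space M. real (card {j \<in> {..<N}. Z j \<omega> \<le> \<tau> + \<delta>}) \<le> real N * (1 - q * exp (- \<delta> / 2)) - e0}"
    have PB1: "measure M Bad1 \<le> exp (- 2 * (\<epsilon> * real m)\<^sup>2 / real N)"
      unfolding Bad1_def by (rule hoeff_count[OF P indZ N p1]) (use eps in simp_all)
    have PB2: "measure M Bad2 \<le> exp (- 2 * e0\<^sup>2 / real N)"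
      unfolding Bad2_def by (rule hoeff_count[OF P indZ N p2 e00])
    have Nq: "real N * (1 - q) = real m" using N by (simp add: q_def)
    have Nq2: "real N * (1 - q * exp (- \<delta> / 2)) - e0 = real m"
      using N unfolding e0_def q_def by (simp add: field_simps)
    have sub: "space M - (Bad1 \<union> Bad2) \<subseteq> Good"
    proof
      fix \<omega> assume w: "\<omega> \<in> space M - (Bad1 \<union> Bad2)"
      have c1: "real (card (Ihat (b \<omega>) N \<tau>)) \<ge> real m - \<epsilon> * real m"
        using w Nq unfolding Bad1_def cardZ by auto
      have "real (card {j \<in> {..<N}. (b \<omega> j)\<^sup>2 \<le> \<tau> + \<delta>}) > real m"
        using w Nq2 unfolding Bad2_def Z_def by auto
      then have c2: "card {j \<in> {..<N}. (b \<omega> j)\<^sup>2 \<le> \<tau> + \<delta>} \<ge> m" by simp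
      show "\<omega> \<in> Good" unfolding Good_def
      proof (intro CollectI conjI allI impI)
        show "\<omega> \<in> space M" using w by simp
        fix I assume I: "I \<subseteq> {..<N} \<and> card I = m \<and> (\<forall>i\<in>I. \<forall>j\<in>{..<N} - I. bval n (A \<omega>) x0 i \<le> bval n (A \<omega>) x0 j)"
        show "(\<Sum>i\<in>I. (bval n (A \<omega>) x0 i)\<^sup>2) / real (card I)
                 \<le> (\<Sum>i\<in>Ihat (bval n (A \<omega>) x0) N \<tau>. (bval n (A \<omega>) x0 i)\<^sup>2)
                     / real (card (Ihat (bval n (A \<omega>) x0) N \<tau>)) + \<epsilon> * (\<tau> + \<delta>)"
          using det_main[of "b \<omega>" I N m \<tau> \<epsilon> \<delta>] I c1 c2 m0 tau0 eps del
          unfolding b_def by (simp add: bval_def)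
      qed
    qed
    have GoodS: "Good \<in> sets M"
    proof -
      have "Good = {\<omega> \<in> space M. \<forall>I. I \<subseteq> {..<N} \<and> card I = m \<and> (\<forall>i\<in>I. \<forall>j\<in>{..<N} - I. bb \<omega> i \<le> bb \<omega> j)
             \<longrightarrow> (\<Sum>i\<in>I. (bb \<omega> i)\<^sup>2) / real (card I)
                 \<le> (\<Sum>i\<in>Ihat (bb \<omega>) N \<tau>. (bb \<omega> i)\<^sup>2) / real (card (Ihat (bb \<omega>) N \<tau>)) + \<epsilon> * (\<tau> + \<delta>)}"
        unfolding Good_def
        by (intro Collect_cong conj_cong refl good_cong) (simp add: bbeq b_def)
      then show ?thesis using good_meas[OF bbm] by simp
    qed
    have BadS: "{\<omega> \<in> space M. real (card {j \<in> {..<N}. Z j \<omega> \<le> t}) \<le> c} \<in> sets M" for t c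
    proof -
      have "{\<omega> \<in> space M. real (card {j \<in> {..<N}. Z j \<omega> \<le> t}) \<le> c}
          = {\<omega> \<in> space M. (\<Sum>i<N. if (bb \<omega> i)\<^sup>2 \<le> t then 1 else 0) \<le> c}"
      proof (intro Collect_cong conj_cong refl)
        fix \<omega>
        have "Ihat (b \<omega>) N t = Ihat (bb \<omega>) N t" by (auto simp: Ihat_def bbeq)
        then show "(real (card {j \<in> {..<N}. Z j \<omega> \<le> t}) \<le> c) = ((\<Sum>i<N. if (bb \<omega> i)\<^sup>2 \<le> t then 1 else 0) \<le> c)"
          unfolding cardZ by (simp only: Ihat_card)
      qed
      also have "\<dots> \<in> sets M"
      proof (rule borel_measurable_le)
        show "(\<lambda>\<omega>. \<Sum>i<N. if (bb \<omega> i)\<^sup>2 \<le> t then 1 else (0::real)) \<in> borel_measurable M" by measurable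
      qed simp
      finally show ?thesis .
    qed
    have B1S: "Bad1 \<in> sets M" unfolding Bad1_def by (rule BadS)
    have B2S: "Bad2 \<in> sets M" unfolding Bad2_def by (rule BadS)
    have g1: "measure M Good \<ge> measure M (space M - (Bad1 \<union> Bad2))"
      by (rule finite_measure_mono[OF sub GoodS])
    have g2: "measure M (space M - (Bad1 \<union> Bad2)) = 1 - measure M (Bad1 \<union> Bad2)"
      using prob_compl[of "Bad1 \<union> Bad2"] B1S B2S by simp
    have g3: "measure M (Bad1 \<union> Bad2) \<le> measure M Bad1 + measure M Bad2"
      by (rule measure_Un_le) (use B1S B2S in auto)
    have mG: "measure M Good \<ge> 1 - measure M Bad1 - measure M Bad2" using g1 g2 g3 by linarith
    have qa: "\<bar>1 - real m / real N\<bar>\<^sup>2 = q\<^sup>2" by (simp add: q_def)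
    have q21: "q\<^sup>2 \<le> 1" using q0 q1 by (simp add: power_le_one)
    have k1: "exp (- 2 * (\<epsilon> * real m)\<^sup>2 / real N) \<le> 2 * exp (- 2 * \<epsilon>\<^sup>2 * \<bar>1 - real m / real N\<bar>\<^sup>2 * (real m)\<^sup>2 / real N)"
    proof -
      define X where "X = \<epsilon>\<^sup>2 * (real m)\<^sup>2 / real N"
      have X0: "X \<ge> 0" unfolding X_def by simp
      have l: "- 2 * (\<epsilon> * real m)\<^sup>2 / real N = - 2 * X" unfolding X_def by (simp add: power_mult_distrib)
      have r: "- 2 * \<epsilon>\<^sup>2 * \<bar>1 - real m / real N\<bar>\<^sup>2 * (real m)\<^sup>2 / real N = - 2 * (q\<^sup>2 * X)"
        unfolding qa X_def by simp
      have qX: "q\<^sup>2 * X \<le> X" using q21 X0 by (simp add: mult_left_le_one_le)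
      have e1: "exp (- 2 * X) \<le> exp (- 2 * (q\<^sup>2 * X))" using qX by simp
      have e2: "exp (- 2 * (q\<^sup>2 * X)) \<le> 2 * exp (- 2 * (q\<^sup>2 * X))" by simp
      show ?thesis unfolding l r using e1 e2 by linarith
    qed
    have k2: "exp (- 2 * e0\<^sup>2 / real N) \<le> 2 * exp (- (1/2) * \<delta>\<^sup>2 * exp (- \<delta>) * \<bar>1 - real m / real N\<bar>\<^sup>2 * real N)"
    proof -
      define u where "u = 1 - exp (- \<delta> / 2)"
      have eb: "(\<delta> / 2) * exp (- \<delta> / 2) \<le> u" unfolding u_def by (rule exp_bound[OF del])
      have eb0: "0 \<le> (\<delta> / 2) * exp (- \<delta> / 2)" using del by simp
      have sq: "((\<delta> / 2) * exp (- \<delta> / 2))\<^sup>2 \<le> u\<^sup>2" by (rule power_mono[OF eb eb0])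
      have ee: "(exp (- (\<delta> / 2)))\<^sup>2 = exp (- \<delta>)"
        by (simp add: power2_eq_square exp_add[symmetric])
      have sq': "\<delta>\<^sup>2 * exp (- \<delta>) / 4 \<le> u\<^sup>2" using sq by (simp add: power_mult_distrib ee power_divide)
      have Nq0: "0 \<le> real N * q\<^sup>2" by simp
      have l: "- 2 * e0\<^sup>2 / real N = - 2 * (real N * q\<^sup>2) * u\<^sup>2"
        unfolding e0_def u_def using N by (simp add: power_mult_distrib power2_eq_square field_simps)
      have r: "- (1/2) * \<delta>\<^sup>2 * exp (- \<delta>) * \<bar>1 - real m / real N\<bar>\<^sup>2 * real N = - 2 * (real N * q\<^sup>2) * (\<delta>\<^sup>2 * exp (- \<delta>) / 4)"
        unfolding qa by (simp add: field_simps)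
      have "(real N * q\<^sup>2) * (\<delta>\<^sup>2 * exp (- \<delta>) / 4) \<le> (real N * q\<^sup>2) * u\<^sup>2"
        by (rule mult_left_mono[OF sq' Nq0])
      then have e1: "exp (- 2 * (real N * q\<^sup>2) * u\<^sup>2) \<le> exp (- 2 * (real N * q\<^sup>2) * (\<delta>\<^sup>2 * exp (- \<delta>) / 4))" by (simp add: mult_ac)
      have e2: "exp (- 2 * (real N * q\<^sup>2) * (\<delta>\<^sup>2 * exp (- \<delta>) / 4)) \<le> 2 * exp (- 2 * (real N * q\<^sup>2) * (\<delta>\<^sup>2 * exp (- \<delta>) / 4))" by simp
      show ?thesis unfolding l r using e1 e2 by linarith
    qed
    show ?thesis using mG PB1 PB2 k1 k2 unfolding R_def by linarith
  qed
  then show ?thesis unfolding Good_def R_def \<tau>_def .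
qed

end
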